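(* Consider AdaHedge for adversarial linear bandits (described in the context) with exploration distribution $\pi$ as in the context and exploration rates $\gamma_t=\min\bigl\{1/2,\ \sqrt{2.5\,d\ln K}\;t^{-1/2}\bigr\}$. Then for all real $m<M$ with $m\le0\le M$ and all oblivious sequences $y_1,y_2,\dots$ in $\mathbb{R}^d$ satisfying $\langle x,y_t\rangle\in[m,M]$ for all $t\ge1$ and all $x\in\mathcal{A}$, for all $T\ge1$, \[ R_T(y_{1:T})\le 12(M-m)\sqrt{dT\ln K}+18(M-m)\,d\ln K . \]
   Context: Oblivious adversarial linear bandits: a finite action set $\mathcal{A}\subset\mathbb{R}^d$ of cardinality $K\ge2$ that spans $\mathbb{R}^d$. The environment fixes beforehand vectors $y_t\in\mathbb{R}^d$, $t\ge1$. At round $t$ the player draws $X_t\in\mathcal{A}$ from a distribution $p_t$ on $\mathcal{A}$ and observes only $\langle X_t,y_t\rangle$. The range $[m,M]$ is unknown to the player. Regret: $R_T(y_{1:T})=\max_{x\in\mathcal{A}}\sum_{t=1}^T\langle x,y_t\rangle-\mathbb{E}[\sum_{t=1}^T\langle X_t,y_t\rangle]$. For a distribution $p$ on $\mathcal{A}$, $M(p)=\sum_{x\in\mathcal{A}}p(x)\,xx^\top$. The exploration distribution $\pi$ on $\mathcal{A}$ is chosen so that $M(\pi)$ is invertible and $\max_{x\in\mathcal{A}}x^\top M(\pi)^{-1}x=d$ (such $\pi$ exists when $\mathcal{A}$ spans $\mathbb{R}^d$). Algorithm: $\eta_1=+\infty$, $q_1$ uniform on $\mathcal{A}$. For $t\ge1$: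 $p_t=(1-\gamma_t)q_t+\gamma_t\pi$; draw $X_t\sim p_t$; observe $\langle X_t,y_t\rangle$; set $\widehat y_t=M(p_t)^{-1}X_t\langle X_t,y_t\rangle$; compute $\delta_t=-\sum_{x}q_t(x)\langle x,\widehat y_t\rangle+\frac1{\eta_t}\ln\bigl(\sum_x q_t(x)e^{\eta_t\langle x,\widehat y_t\rangle}\bigr)$ if $\eta_t<\infty$ and $\delta_t=-\sum_x q_t(x)\langle x,\widehat y_t\rangle+\max_x\langle x,\widehat y_t\rangle$ if $\eta_t=\infty$; set $\eta_{t+1}=\ln K/\sum_{s=1}^t\delta_s$; set $q_{t+1}(a)\propto\exp\bigl(\eta_{t+1}\sum_{s=1}^t\langle a,\widehat y_s\rangle\bigr)$, normalized over $a\in\mathcal{A}$. *)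

theory Defs
  imports "HOL-Analysis.Analysis"
begin

text \<open>Actions are vectors in real^'d (d = CARD('d)); a distribution on the finite action
set A is a function A -> real.  K = card A.\<close>

definition outer :: "real^'d \<Rightarrow> real^'d^'d" where
  "outer x = (\<chi> i j. x$i * x$j)"

definition Mmat :: "(real^'d) set \<Rightarrow> (real^'d \<Rightarrow> real) \<Rightarrow> real^'d^'d" where
  "Mmat A p = (\<Sum>x\<in>A. p x *\<^sub>R outer x)"

text \<open>q_{t} from cumulative estimate S = sum_{s<t} yhat_s and cumulative mixability gap
D = sum_{s<t} delta_s.  eta = ln K / D; eta = +infinity iff D = 0, in which case q is
uniform on the maximisers of <a,S> (for t = 1 this is the uniform distribution).\<close>
definition ah_argmax :: "(real^'d) set \<Rightarrow> real^'d \<Rightarrow> (real^'d) set" where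
  "ah_argmax A S = {a\<in>A. a \<bullet> S = Max ((\<lambda>b. b \<bullet> S) ` A)}"

definition ah_q :: "(real^'d) set \<Rightarrow> real^'d \<Rightarrow> real \<Rightarrow> real^'d \<Rightarrow> real" where
  "ah_q A S D a =
     (if D = 0 then (if a \<in> ah_argmax A S then 1 / real (card (ah_argmax A S)) else 0)
      else exp (ln (real (card A)) / D * (a \<bullet> S)) /
           (\<Sum>b\<in>A. exp (ln (real (card A)) / D * (b \<bullet> S))))"

definition ah_p :: "(real^'d) set \<Rightarrow> (real^'d \<Rightarrow> real) \<Rightarrow> real \<Rightarrow> real^'d \<Rightarrow> real \<Rightarrow> real^'d \<Rightarrow> real" where
  "ah_p A \<pi> g S D a = (1 - g) * ah_q A S D a + g * \<pi> a"

definition ah_yhat :: "(real^'d) set \<Rightarrow> (real^'d \<Rightarrow> real) \<Rightarrow> real^'d \<Rightarrow> real^'d \<Rightarrow> real^'d" where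
  "ah_yhat A p x y = (x \<bullet> y) *\<^sub>R (matrix_inv (Mmat A p) *v x)"

definition ah_delta :: "(real^'d) set \<Rightarrow> (real^'d \<Rightarrow> real) \<Rightarrow> real \<Rightarrow> real^'d \<Rightarrow> real" where
  "ah_delta A q D yh =
     (if D = 0 then - (\<Sum>x\<in>A. q x * (x \<bullet> yh)) + Max ((\<lambda>x. x \<bullet> yh) ` A)
      else - (\<Sum>x\<in>A. q x * (x \<bullet> yh)) +
           (D / ln (real (card A))) *
             ln (\<Sum>x\<in>A. q x * exp (ln (real (card A)) / D * (x \<bullet> yh))))"

primrec ah_state :: "(real^'d) set \<Rightarrow> (real^'d \<Rightarrow> real) \<Rightarrow> (nat \<Rightarrow> real) \<Rightarrow>
    (nat \<Rightarrow> real^'d) \<Rightarrow> (nat \<Rightarrow> real^'d) \<Rightarrow> nat \<Rightarrow> (real^'d) \<times> real" where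
  "ah_state A \<pi> \<gamma> y X 0 = (0, 0)"
| "ah_state A \<pi> \<gamma> y X (Suc t) =
     (case ah_state A \<pi> \<gamma> y X t of (S, D) \<Rightarrow>
       (let q = ah_q A S D;
            p = ah_p A \<pi> (\<gamma> (Suc t)) S D;
            yh = ah_yhat A p (X (Suc t)) (y (Suc t))
        in (S + yh, D + ah_delta A q D yh)))"

text \<open>p_t(a) given the history X 1 .. X (t-1)\<close>
definition ah_pt :: "(real^'d) set \<Rightarrow> (real^'d \<Rightarrow> real) \<Rightarrow> (nat \<Rightarrow> real) \<Rightarrow>
    (nat \<Rightarrow> real^'d) \<Rightarrow> (nat \<Rightarrow> real^'d) \<Rightarrow> nat \<Rightarrow> real^'d \<Rightarrow> real" where
  "ah_pt A \<pi> \<gamma> y X t a =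
     ah_p A \<pi> (\<gamma> t) (fst (ah_state A \<pi> \<gamma> y X (t - 1))) (snd (ah_state A \<pi> \<gamma> y X (t - 1))) a"

text \<open>E[sum_{t=1}^T <X_t,y_t>], summing over all action trajectories with their probabilities.\<close>
definition ah_expected_reward :: "(real^'d) set \<Rightarrow> (real^'d \<Rightarrow> real) \<Rightarrow> (nat \<Rightarrow> real) \<Rightarrow>
    (nat \<Rightarrow> real^'d) \<Rightarrow> nat \<Rightarrow> real" where
  "ah_expected_reward A \<pi> \<gamma> y T =
     (\<Sum>X\<in>PiE {1..T} (\<lambda>_. A).
        (\<Prod>t\<in>{1..T}. ah_pt A \<pi> \<gamma> y X t (X t)) * (\<Sum>t=1..T. X t \<bullet> y t))"

definition ah_regret :: "(real^'d) set \<Rightarrow> (real^'d \<Rightarrow> real) \<Rightarrow> (nat \<Rightarrow> real) \<Rightarrow>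
    (nat \<Rightarrow> real^'d) \<Rightarrow> nat \<Rightarrow> real" where
  "ah_regret A \<pi> \<gamma> y T =
     Max ((\<lambda>x. \<Sum>t=1..T. x \<bullet> y t) ` A) - ah_expected_reward A \<pi> \<gamma> y T"

definition ah_gamma :: "(real^'d) set \<Rightarrow> nat \<Rightarrow> real" where
  "ah_gamma A t = min (1/2)
     (sqrt (5/2 * real CARD('d) * ln (real (card A))) / sqrt (real t))"

end

theory Submission
  imports Defs
begin


lemma mmat_mulv:
  fixes A :: "(real^'d) set"
  assumes "finite A"
  shows "Mmat A p *v u = (\<Sum>a\<in>A. (p a * (a \<bullet> u)) *\<^sub>R a)"
  unfolding Mmat_def
  by (simp add: vec_eq_iff matrix_vector_mult_def outer_def sum_component inner_vec_def
        sum_distrib_left sum_distrib_right mult.assoc mult.left_commute)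
   (subst sum.swap, auto intro!: sum.cong)

lemma mmat_qf:
  fixes A :: "(real^'d) set"
  assumes "finite A"
  shows "(Mmat A p *v u) \<bullet> v = (\<Sum>a\<in>A. p a * (a \<bullet> u) * (a \<bullet> v))"
  by (simp add: mmat_mulv[OF assms] inner_sum_left)

lemma minv:
  fixes N :: "real^'d^'d"
  assumes "invertible N"
  shows "N ** matrix_inv N = mat 1" "matrix_inv N ** N = mat 1"
  using someI_ex[OF assms[unfolded invertible_def]] unfolding matrix_inv_def by auto

lemma minv_v:
  fixes N :: "real^'d^'d"
  assumes "invertible N"
  shows "N *v (matrix_inv N *v x) = x" "matrix_inv N *v (N *v x) = x"
  by (simp_all add: matrix_vector_mul_assoc minv[OF assms])

lemma ker_invertible:
  fixes N :: "real^'d^'d"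
  assumes "\<And>w. N *v w = 0 \<Longrightarrow> w = 0"
  shows "invertible N"
  using assms invertible_left_inverse matrix_left_invertible_ker by blast

lemma mmat_p_invertible:
  fixes A :: "(real^'d) set"
  assumes A: "finite A" and g: "g > 0" and pp: "\<forall>a\<in>A. p a \<ge> g * \<pi> a"
    and pi: "\<forall>a\<in>A. \<pi> a \<ge> 0" and inv: "invertible (Mmat A \<pi>)"
  shows "invertible (Mmat A p)"
proof (rule ker_invertible)
  fix w assume w: "Mmat A p *v w = 0"
  have "0 = (Mmat A p *v w) \<bullet> w" using w by simp
  also have "\<dots> = (\<Sum>a\<in>A. p a * (a \<bullet> w) * (a \<bullet> w))" by (rule mmat_qf[OF A])
  finally have 0: "(\<Sum>a\<in>A. p a * (a \<bullet> w) * (a \<bullet> w)) = 0" by simp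
  have le: "g * (\<Sum>a\<in>A. \<pi> a * (a \<bullet> w) * (a \<bullet> w)) \<le> (\<Sum>a\<in>A. p a * (a \<bullet> w) * (a \<bullet> w))"
    unfolding sum_distrib_left
  proof (rule sum_mono)
    fix a assume a: "a \<in> A"
    have "g * \<pi> a * ((a \<bullet> w) * (a \<bullet> w)) \<le> p a * ((a \<bullet> w) * (a \<bullet> w))"
      by (rule mult_right_mono) (use pp a in auto)
    thus "g * (\<pi> a * (a \<bullet> w) * (a \<bullet> w)) \<le> p a * (a \<bullet> w) * (a \<bullet> w)"
      by (simp add: mult.assoc)
  qed
  have nn: "\<forall>a\<in>A. 0 \<le> \<pi> a * (a \<bullet> w) * (a \<bullet> w)" using pi by (simp add: mult.assoc)
  hence "(\<Sum>a\<in>A. \<pi> a * (a \<bullet> w) * (a \<bullet> w)) \<ge> 0" by (simp add: sum_nonneg)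
  moreover have "g * (\<Sum>a\<in>A. \<pi> a * (a \<bullet> w) * (a \<bullet> w)) \<le> 0" using le 0 by simp
  hence "(\<Sum>a\<in>A. \<pi> a * (a \<bullet> w) * (a \<bullet> w)) \<le> 0" using g by (simp add: mult_le_0_iff)
  ultimately have "(\<Sum>a\<in>A. \<pi> a * (a \<bullet> w) * (a \<bullet> w)) = 0" by linarith
  hence "\<forall>a\<in>A. \<pi> a * (a \<bullet> w) * (a \<bullet> w) = 0"
    by (subst (asm) sum_nonneg_eq_0_iff[OF A]) (use nn in auto)
  hence "\<forall>a\<in>A. \<pi> a * (a \<bullet> w) = 0" by simp
  hence "Mmat A \<pi> *v w = 0" unfolding mmat_mulv[OF A] by (intro sum.neutral) auto
  thus "w = 0" using minv_v(2)[OF inv, of w] by simp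
qed

lemma minv_sym:
  fixes A :: "(real^'d) set"
  assumes A: "finite A" and inv: "invertible (Mmat A p)"
  shows "x \<bullet> (matrix_inv (Mmat A p) *v z) =
    (\<Sum>a\<in>A. p a * (a \<bullet> (matrix_inv (Mmat A p) *v x)) * (a \<bullet> (matrix_inv (Mmat A p) *v z)))"
proof -
  have "x \<bullet> (matrix_inv (Mmat A p) *v z) = (Mmat A p *v (matrix_inv (Mmat A p) *v x)) \<bullet> (matrix_inv (Mmat A p) *v z)"
    by (simp add: minv_v[OF inv])
  also have "\<dots> = (\<Sum>a\<in>A. p a * (a \<bullet> (matrix_inv (Mmat A p) *v x)) * (a \<bullet> (matrix_inv (Mmat A p) *v z)))" by (rule mmat_qf[OF A])
  finally show ?thesis .
qed

lemma minv_comm: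
  fixes A :: "(real^'d) set"
  assumes A: "finite A" and inv: "invertible (Mmat A p)"
  shows "x \<bullet> (matrix_inv (Mmat A p) *v z) = z \<bullet> (matrix_inv (Mmat A p) *v x)"
  unfolding minv_sym[OF A inv, of x z] minv_sym[OF A inv, of z x]
  by (rule sum.cong) (simp_all add: mult.commute mult.left_commute)

lemma minv_nonneg:
  fixes A :: "(real^'d) set"
  assumes A: "finite A" and inv: "invertible (Mmat A p)" and p: "\<forall>a\<in>A. p a \<ge> 0"
  shows "x \<bullet> (matrix_inv (Mmat A p) *v x) \<ge> 0"
  unfolding minv_sym[OF A inv, of x x] by (rule sum_nonneg) (use p in \<open>simp add: mult.assoc\<close>)

lemma minv_apply:
  fixes A :: "(real^'d) set"
  assumes A: "finite A" and inv: "invertible (Mmat A p)"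
  shows "(\<Sum>X\<in>A. p X *\<^sub>R ((X \<bullet> y) *\<^sub>R (matrix_inv (Mmat A p) *v X))) = y"
proof -
  have "(\<Sum>X\<in>A. p X *\<^sub>R ((X \<bullet> y) *\<^sub>R (matrix_inv (Mmat A p) *v X)))
     = matrix_inv (Mmat A p) *v (\<Sum>X\<in>A. (p X * (X \<bullet> y)) *\<^sub>R X)"
    by (simp add: linear_sum[OF matrix_vector_mul_linear] matrix_vector_mult_scaleR)
  also have "\<dots> = matrix_inv (Mmat A p) *v (Mmat A p *v y)"
    by (simp add: mmat_mulv[OF A] inner_commute)
  also have "\<dots> = y" by (rule minv_v(2)[OF inv])
  finally show ?thesis .
qed

lemma minv_second:
  fixes A :: "(real^'d) set"
  assumes A: "finite A" and inv: "invertible (Mmat A p)"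
  shows "(\<Sum>X\<in>A. p X * (x \<bullet> (matrix_inv (Mmat A p) *v X))^2) = x \<bullet> (matrix_inv (Mmat A p) *v x)"
  unfolding minv_sym[OF A inv, of x x]
proof (rule sum.cong)
  fix X assume "X \<in> A"
  have "x \<bullet> (matrix_inv (Mmat A p) *v X) = X \<bullet> (matrix_inv (Mmat A p) *v x)"
    by (rule minv_comm[OF A inv])
  thus "p X * (x \<bullet> (matrix_inv (Mmat A p) *v X))\<^sup>2 =
    p X * (X \<bullet> (matrix_inv (Mmat A p) *v x)) * (X \<bullet> (matrix_inv (Mmat A p) *v x))"
    by (simp add: power2_eq_square)
qed simp

lemma mmat_entry:
  fixes A :: "(real^'d) set"
  shows "Mmat A p $ i $ j = (\<Sum>x\<in>A. p x * (x$i * x$j))"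
  unfolding Mmat_def by (simp add: sum_component outer_def)

lemma minv_trace:
  fixes A :: "(real^'d) set"
  assumes A: "finite A" and inv: "invertible (Mmat A p)"
  shows "(\<Sum>x\<in>A. p x * (x \<bullet> (matrix_inv (Mmat A p) *v x))) = real CARD('d)"
proof -
  let ?B = "matrix_inv (Mmat A p)"
  have "(\<Sum>x\<in>A. p x * (x \<bullet> (?B *v x))) = (\<Sum>x\<in>A. \<Sum>i\<in>UNIV. \<Sum>j\<in>UNIV. p x * (x$i * (x$j * ?B$i$j)))"
    by (simp add: inner_vec_def matrix_vector_mult_def sum_distrib_left sum_distrib_right ac_simps)
  also have "\<dots> = (\<Sum>i\<in>UNIV. \<Sum>j\<in>UNIV. \<Sum>x\<in>A. p x * (x$i * (x$j * ?B$i$j)))"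
    by (simp add: sum.swap[of _ A] sum.swap[of _ A UNIV])
  also have "\<dots> = (\<Sum>i\<in>UNIV. \<Sum>j\<in>UNIV. ?B$i$j * Mmat A p $ j $ i)"
    by (intro sum.cong refl) (simp add: mmat_entry sum_distrib_left ac_simps)
  also have "\<dots> = (\<Sum>i\<in>UNIV. (?B ** Mmat A p) $ i $ i)"
    by (simp add: matrix_matrix_mult_def)
  also have "\<dots> = (\<Sum>i\<in>(UNIV::'d set). 1)"
    by (simp add: minv(2)[OF inv] mat_def)
  finally show ?thesis by simp
qed

lemma minv_le:
  fixes A :: "(real^'d) set"
  assumes A: "finite A" and g: "g > 0" and pp: "\<forall>a\<in>A. p a \<ge> g * \<pi> a"
    and pi: "\<forall>a\<in>A. \<pi> a \<ge> 0" and invpi: "invertible (Mmat A \<pi>)" and inv: "invertible (Mmat A p)"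
  shows "x \<bullet> (matrix_inv (Mmat A p) *v x) \<le> (x \<bullet> (matrix_inv (Mmat A \<pi>) *v x)) / g"
proof -
  define w where "w = matrix_inv (Mmat A p) *v x"
  define z where "z = matrix_inv (Mmat A \<pi>) *v x"
  define Qw where "Qw = (\<Sum>a\<in>A. \<pi> a * (a \<bullet> w) * (a \<bullet> w))"
  have xw: "x \<bullet> w = (\<Sum>a\<in>A. p a * (a \<bullet> w) * (a \<bullet> w))"
    using minv_sym[OF A inv, of x x] unfolding w_def .
  have "g * Qw \<le> x \<bullet> w" unfolding xw Qw_def sum_distrib_left
  proof (rule sum_mono)
    fix a assume a: "a \<in> A"
    have "g * \<pi> a * ((a \<bullet> w) * (a \<bullet> w)) \<le> p a * ((a \<bullet> w) * (a \<bullet> w))"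
      by (rule mult_right_mono) (use pp a in auto)
    thus "g * (\<pi> a * (a \<bullet> w) * (a \<bullet> w)) \<le> p a * (a \<bullet> w) * (a \<bullet> w)"
      by (simp add: mult.assoc)
  qed
  hence 1: "g * (g * Qw) \<le> g * (x \<bullet> w)" using g by simp
  have Pwz: "(\<Sum>a\<in>A. \<pi> a * (a \<bullet> z) * (a \<bullet> w)) = x \<bullet> w"
    using mmat_qf[OF A, of \<pi> z w] minv_v(1)[OF invpi, of x] unfolding z_def by simp
  have Rz: "(\<Sum>a\<in>A. \<pi> a * (a \<bullet> z) * (a \<bullet> z)) = x \<bullet> z"
    using mmat_qf[OF A, of \<pi> z z] minv_v(1)[OF invpi, of x] unfolding z_def by simp
  have "0 \<le> (\<Sum>a\<in>A. \<pi> a * (g * (a \<bullet> w) - (a \<bullet> z))^2)"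
    by (rule sum_nonneg) (use pi in auto)
  also have "\<dots> = g * (g * Qw) - 2 * g * (\<Sum>a\<in>A. \<pi> a * (a \<bullet> z) * (a \<bullet> w)) + (\<Sum>a\<in>A. \<pi> a * (a \<bullet> z) * (a \<bullet> z))"
    unfolding Qw_def
    by (simp add: power2_eq_square algebra_simps sum.distrib sum_subtractf sum_distrib_left)
  finally have "0 \<le> g * (g * Qw) - 2 * g * (x \<bullet> w) + x \<bullet> z" unfolding Pwz Rz .
  with 1 have "g * (x \<bullet> w) \<le> x \<bullet> z" by linarith
  thus ?thesis using g unfolding w_def z_def by (simp add: field_simps)
qed

lemma abs_aux: "0 \<le> a - 2 * s + b \<Longrightarrow> 0 \<le> a + 2 * s + b \<Longrightarrow> \<bar>s::real\<bar> \<le> (a + b) / 2"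
  by (simp add: abs_le_iff)

lemma minv_cs:
  fixes A :: "(real^'d) set"
  assumes A: "finite A" and inv: "invertible (Mmat A p)" and p: "\<forall>a\<in>A. p a \<ge> 0"
  shows "\<bar>x \<bullet> (matrix_inv (Mmat A p) *v z)\<bar> \<le>
     (x \<bullet> (matrix_inv (Mmat A p) *v x) + z \<bullet> (matrix_inv (Mmat A p) *v z)) / 2"
proof -
  define u where "u = matrix_inv (Mmat A p) *v x"
  define v where "v = matrix_inv (Mmat A p) *v z"
  have e1: "x \<bullet> (matrix_inv (Mmat A p) *v z) = (\<Sum>a\<in>A. p a * (a \<bullet> u) * (a \<bullet> v))"
    using minv_sym[OF A inv, of x z] unfolding u_def v_def .
  have e2: "x \<bullet> (matrix_inv (Mmat A p) *v x) = (\<Sum>a\<in>A. p a * (a \<bullet> u) * (a \<bullet> u))"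
    using minv_sym[OF A inv, of x x] unfolding u_def .
  have e3: "z \<bullet> (matrix_inv (Mmat A p) *v z) = (\<Sum>a\<in>A. p a * (a \<bullet> v) * (a \<bullet> v))"
    using minv_sym[OF A inv, of z z] unfolding v_def .
  have "0 \<le> (\<Sum>a\<in>A. p a * ((a \<bullet> u) - (a \<bullet> v))^2)"
    by (rule sum_nonneg) (use p in auto)
  also have "\<dots> = (\<Sum>a\<in>A. p a * (a \<bullet> u) * (a \<bullet> u)) - 2 * (\<Sum>a\<in>A. p a * (a \<bullet> u) * (a \<bullet> v)) + (\<Sum>a\<in>A. p a * (a \<bullet> v) * (a \<bullet> v))"
    by (simp add: power2_eq_square algebra_simps sum.distrib sum_subtractf sum_distrib_left)
  finally have 1: "0 \<le> \<dots>" .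
  have "0 \<le> (\<Sum>a\<in>A. p a * ((a \<bullet> u) + (a \<bullet> v))^2)"
    by (rule sum_nonneg) (use p in auto)
  also have "\<dots> = (\<Sum>a\<in>A. p a * (a \<bullet> u) * (a \<bullet> u)) + 2 * (\<Sum>a\<in>A. p a * (a \<bullet> u) * (a \<bullet> v)) + (\<Sum>a\<in>A. p a * (a \<bullet> v) * (a \<bullet> v))"
    by (simp add: power2_eq_square algebra_simps sum.distrib sum_distrib_left)
  finally have 2: "0 \<le> \<dots>" .
  show ?thesis unfolding e1 e2 e3 by (rule abs_aux[OF 1 2])
qed



lemma exp_pade:
  fixes u :: real assumes "0 \<le> u"
  shows "exp u * (6 - 2*u) \<le> 6 + 4*u + u^2"
proof -
  define f where "f v = (6+4* v+v^2) * exp(-v) - (6 - 2* v)" for v :: real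
  have d: "(f has_real_derivative (2 - (2+2* v+v^2)*exp(-v))) (at v)" for v
    unfolding f_def by (auto intro!: derivative_eq_intros simp: algebra_simps power2_eq_square)
  have nn: "0 \<le> 2 - (2+2* v+v^2)*exp(-v)" if "0 \<le> v" for v :: real
  proof -
    have "1 + v + v^2 / 2 \<le> exp v" by (rule exp_lower_Taylor_quadratic[OF that])
    hence "(2+2* v+v^2) \<le> 2 * exp v" by simp
    hence "(2+2* v+v^2)*exp(-v) \<le> 2 * exp v * exp (-v)" by (simp add: mult_right_mono)
    also have "\<dots> = 2" by (simp add: exp_minus)
    finally show ?thesis by simp
  qed
  have "f 0 \<le> f u"
    by (rule deriv_nonneg_imp_mono[OF d nn assms]) auto
  hence "6 - 2*u \<le> (6+4*u+u^2) * exp(-u)" by (simp add: f_def)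
  hence "(6 - 2*u) * exp u \<le> (6+4*u+u^2) * exp(-u) * exp u" by (simp add: mult_right_mono)
  also have "\<dots> = 6+4*u+u^2" by (simp add: exp_minus)
  finally show ?thesis by (simp add: mult.commute)
qed

lemma exp_quad_neg:
  fixes u :: real assumes "u \<le> 0"
  shows "exp u \<le> 1 + u + u^2/2"
proof -
  define f where "f v = 1 + v + v^2 / 2 - exp v" for v :: real
  have d: "(f has_real_derivative (1 + v - exp v)) (at v)" for v
    unfolding f_def by (auto intro!: derivative_eq_intros simp: algebra_simps power2_eq_square)
  have "f 0 \<le> f u"
  proof (rule deriv_nonpos_imp_antimono[OF d _ assms])
    fix x :: real show "1 + x - exp x \<le> 0" using exp_ge_add_one_self[of x] by linarith
  qed
  thus ?thesis by (simp add: f_def)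
qed

lemma bern_pt:
  fixes u \<beta> :: real assumes "u \<le> \<beta>" "0 \<le> \<beta>" "\<beta> < 3"
  shows "(exp u - 1 - u) * (2*(1 - \<beta>/3)) \<le> u^2"
proof (cases "u \<le> 0")
  case True
  have e: "exp u - 1 - u \<le> u^2/2" using exp_quad_neg[OF True] by simp
  have e0: "0 \<le> exp u - 1 - u" using exp_ge_add_one_self[of u] by linarith
  have c: "0 \<le> 2*(1 - \<beta>/3)" "2*(1 - \<beta>/3) \<le> 2" using assms by auto
  have "(exp u - 1 - u) * (2*(1 - \<beta>/3)) \<le> (u^2/2) * (2*(1 - \<beta>/3))"
    by (rule mult_right_mono[OF e c(1)])
  also have "\<dots> \<le> (u^2/2) * 2" by (rule mult_left_mono[OF c(2)]) simp
  finally show ?thesis by simp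
next
  case False
  hence u0: "0 \<le> u" by simp
  have p: "exp u * (6 - 2*u) \<le> 6 + 4*u + u^2" by (rule exp_pade[OF u0])
  have e0: "0 \<le> exp u - 1 - u" using exp_ge_add_one_self[of u] by linarith
  have "(exp u - 1 - u) * (6 - 2*\<beta>) \<le> (exp u - 1 - u) * (6 - 2*u)"
    by (rule mult_left_mono[OF _ e0]) (use assms in simp)
  also have "\<dots> = exp u * (6 - 2*u) - (1+u)*(6-2*u)" by (simp add: algebra_simps)
  also have "\<dots> \<le> 3 * u^2" using p by (simp add: algebra_simps power2_eq_square)
  finally have "(exp u - 1 - u) * (6 - 2*\<beta>) \<le> 3 * u^2" .
  moreover have "(exp u - 1 - u) * (2*(1 - \<beta>/3)) = ((exp u - 1 - u) * (6 - 2*\<beta>)) / 3"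
    by (simp add: field_simps)
  ultimately show ?thesis by linarith
qed

lemma bern_Z1:
  fixes q u :: "'a \<Rightarrow> real"
  assumes A: "finite A" and q0: "\<forall>x\<in>A. q x \<ge> 0" and q1: "(\<Sum>x\<in>A. q x) = 1"
    and qu: "(\<Sum>x\<in>A. q x * u x) = 0"
  shows "1 \<le> (\<Sum>x\<in>A. q x * exp (u x))"
proof -
  have "(\<Sum>x\<in>A. q x * (1 + u x)) \<le> (\<Sum>x\<in>A. q x * exp (u x))"
    by (rule sum_mono) (use q0 in \<open>auto intro: mult_left_mono\<close>)
  moreover have "(\<Sum>x\<in>A. q x * (1 + u x)) = 1" using q1 qu by (simp add: algebra_simps sum.distrib)
  ultimately show ?thesis by simp
qed

lemma bern_Z:
  fixes q u :: "'a \<Rightarrow> real"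
  assumes A: "finite A" and q0: "\<forall>x\<in>A. q x \<ge> 0" and q1: "(\<Sum>x\<in>A. q x) = 1"
    and qu: "(\<Sum>x\<in>A. q x * u x) = 0" and ub: "\<forall>x\<in>A. u x \<le> \<beta>" and b0: "0 \<le> \<beta>"
  shows "1 \<le> (\<Sum>x\<in>A. q x * exp (u x))"
    and "ln (\<Sum>x\<in>A. q x * exp (u x)) \<le> \<beta>"
    and "2 * ln (\<Sum>x\<in>A. q x * exp (u x)) * (1 - \<beta>/3) \<le> (\<Sum>x\<in>A. q x * (u x)^2)"
proof -
  define Z where "Z = (\<Sum>x\<in>A. q x * exp (u x))"
  have "(\<Sum>x\<in>A. q x * (1 + u x)) \<le> Z" unfolding Z_def
    by (rule sum_mono) (use q0 in \<open>auto intro: mult_left_mono\<close>)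
  moreover have "(\<Sum>x\<in>A. q x * (1 + u x)) = 1" using q1 qu by (simp add: algebra_simps sum.distrib)
  ultimately have Z1: "1 \<le> Z" by simp
  thus "1 \<le> (\<Sum>x\<in>A. q x * exp (u x))" by (simp add: Z_def)
  have "Z \<le> (\<Sum>x\<in>A. q x * exp \<beta>)" unfolding Z_def
    by (rule sum_mono) (use q0 ub in \<open>auto intro: mult_left_mono\<close>)
  also have "\<dots> = exp \<beta>" using q1 by (simp add: sum_distrib_right[symmetric])
  finally have "ln Z \<le> ln (exp \<beta>)" using Z1 by (subst ln_le_cancel_iff) auto
  hence "ln Z \<le> \<beta>" by simp
  thus "ln (\<Sum>x\<in>A. q x * exp (u x)) \<le> \<beta>" by (simp add: Z_def)
  have lz0: "0 \<le> ln Z" using Z1 by simp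
  show "2 * ln (\<Sum>x\<in>A. q x * exp (u x)) * (1 - \<beta>/3) \<le> (\<Sum>x\<in>A. q x * (u x)^2)"
  proof (cases "\<beta> < 3")
    case False
    have "2 * ln Z * (1 - \<beta>/3) \<le> 0" using lz0 False by (simp add: mult_nonneg_nonpos)
    also have "0 \<le> (\<Sum>x\<in>A. q x * (u x)^2)" by (rule sum_nonneg) (use q0 in auto)
    finally show ?thesis by (simp add: Z_def)
  next
    case True
    have c: "0 < 2*(1 - \<beta>/3)" using True by simp
    have "ln Z \<le> Z - 1" using ln_le_minus_one Z1 by simp
    also have "\<dots> = (\<Sum>x\<in>A. q x * (exp (u x) - 1 - u x))"
      using q1 qu by (simp add: Z_def algebra_simps sum.distrib sum_subtractf)
    finally have "ln Z * (2*(1 - \<beta>/3)) \<le> (\<Sum>x\<in>A. q x * (exp (u x) - 1 - u x)) * (2*(1 - \<beta>/3))"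
      using c by (simp add: mult_right_mono)
    also have "\<dots> = (\<Sum>x\<in>A. q x * ((exp (u x) - 1 - u x) * (2*(1 - \<beta>/3))))"
      by (simp add: sum_distrib_right mult.assoc)
    also have "\<dots> \<le> (\<Sum>x\<in>A. q x * (u x)^2)"
      by (rule sum_mono) (use q0 ub b0 True bern_pt in \<open>auto intro: mult_left_mono\<close>)
    finally show ?thesis by (simp add: Z_def algebra_simps)
  qed
qed

lemma q_dist:
  fixes A :: "(real^'d) set"
  assumes A: "finite A" "A \<noteq> {}"
  shows "\<forall>a\<in>A. 0 \<le> ah_q A S D a" "(\<Sum>a\<in>A. ah_q A S D a) = 1"
proof -
  show "\<forall>a\<in>A. 0 \<le> ah_q A S D a" unfolding ah_q_def by (auto intro!: sum_nonneg divide_nonneg_pos sum_pos A)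
  show "(\<Sum>a\<in>A. ah_q A S D a) = 1"
  proof (cases "D = 0")
    case True
    define Am where "Am = ah_argmax A S"
    have fin: "finite ((\<lambda>b. b \<bullet> S) ` A)" "(\<lambda>b. b \<bullet> S) ` A \<noteq> {}" using A by auto
    obtain x0 where "x0 \<in> A" "x0 \<bullet> S = Max ((\<lambda>b. b \<bullet> S) ` A)"
      using Max_in[OF fin] by auto
    hence ne: "Am \<noteq> {}" unfolding Am_def ah_argmax_def by auto
    have sub: "Am \<subseteq> A" unfolding Am_def ah_argmax_def by auto
    hence fAm: "finite Am" using A finite_subset by blast
    have "(\<Sum>a\<in>A. ah_q A S D a) = (\<Sum>a\<in>A. if a \<in> Am then 1 / real (card Am) else 0)"
      unfolding ah_q_def Am_def using True by simp
    also have "\<dots> = (\<Sum>a\<in>Am. 1 / real (card Am))"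
      using sub by (simp add: sum.If_cases[OF A(1)] Int_absorb1 Int_def) (metis (no_types, lifting) Collect_cong Int_def inf.absorb_iff2 sub)
    also have "\<dots> = 1" using ne fAm by simp
    finally show ?thesis .
  next
    case False
    have pos: "0 < (\<Sum>b\<in>A. exp (ln (real (card A)) / D * (b \<bullet> S)))"
      by (rule sum_pos) (use A in auto)
    show ?thesis unfolding ah_q_def using False pos by (simp add: sum_divide_distrib[symmetric])
  qed
qed

lemma delta_pos_form:
  fixes A :: "(real^'d) set" and q :: "real^'d \<Rightarrow> real"
  assumes A: "finite A" and K: "card A \<ge> 2" and q0: "\<forall>x\<in>A. q x \<ge> 0" and q1: "(\<Sum>x\<in>A. q x) = 1"
    and D: "D > 0"
  shows "ah_delta A q D g = (D / ln (real (card A))) *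
     ln (\<Sum>x\<in>A. q x * exp (ln (real (card A)) / D * (x \<bullet> g - (\<Sum>x\<in>A. q x * (x \<bullet> g)))))"
proof -
  define L where "L = ln (real (card A))"
  define \<eta> where "\<eta> = L / D"
  define \<mu> where "\<mu> = (\<Sum>x\<in>A. q x * (x \<bullet> g))"
  have L: "L > 0" unfolding L_def using K by simp
  have eta: "\<eta> > 0" unfolding \<eta>_def using L D by simp
  define Z where "Z = (\<Sum>x\<in>A. q x * exp (\<eta> * (x \<bullet> g - \<mu>)))"
  have "(\<Sum>x\<in>A. q x * (\<eta> * (x \<bullet> g - \<mu>))) = \<eta> * ((\<Sum>x\<in>A. q x * (x \<bullet> g)) - \<mu> * (\<Sum>x\<in>A. q x))"
    by (simp add: algebra_simps sum_subtractf sum_distrib_left sum_distrib_right)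
  hence qu: "(\<Sum>x\<in>A. q x * (\<eta> * (x \<bullet> g - \<mu>))) = 0" using q1 by (simp add: \<mu>_def)
  have Z1: "1 \<le> Z" unfolding Z_def
    by (rule bern_Z1[OF A q0 q1 qu])
  have "(\<Sum>x\<in>A. q x * exp (\<eta> * (x \<bullet> g))) = (\<Sum>x\<in>A. exp (\<eta> * \<mu>) * (q x * exp (\<eta> * (x \<bullet> g - \<mu>))))"
    by (rule sum.cong) (simp_all add: algebra_simps flip: exp_add)
  also have "\<dots> = exp (\<eta> * \<mu>) * Z" by (simp add: Z_def sum_distrib_left)
  finally have "ln (\<Sum>x\<in>A. q x * exp (\<eta> * (x \<bullet> g))) = \<eta> * \<mu> + ln Z"
    using Z1 by (simp add: ln_mult)
  moreover have "D / L * \<eta> = 1" unfolding \<eta>_def using L D by simp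
  ultimately have "ah_delta A q D g = D / L * ln Z"
    unfolding ah_delta_def using D eta by (simp add: L_def[symmetric] \<eta>_def[symmetric] \<mu>_def[symmetric] algebra_simps)
  thus ?thesis by (simp add: Z_def L_def \<eta>_def \<mu>_def)
qed

lemma delta_bounds:
  fixes A :: "(real^'d) set" and q :: "real^'d \<Rightarrow> real"
  assumes A: "finite A" and K: "card A \<ge> 2" and q0: "\<forall>x\<in>A. q x \<ge> 0" and q1: "(\<Sum>x\<in>A. q x) = 1"
    and D: "D \<ge> 0" and B: "B \<ge> 0" and gB: "\<forall>x\<in>A. x \<bullet> g - (\<Sum>x\<in>A. q x * (x \<bullet> g)) \<le> B"
  shows "0 \<le> ah_delta A q D g" "ah_delta A q D g \<le> B"
    "2 * D * ah_delta A q D g \<le> ln (real (card A)) * (\<Sum>x\<in>A. q x * (x \<bullet> g)^2)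
        + 2/3 * ln (real (card A)) * B * ah_delta A q D g"
proof -
  define L where "L = ln (real (card A))"
  define \<mu> where "\<mu> = (\<Sum>x\<in>A. q x * (x \<bullet> g))"
  define v where "v = (\<Sum>x\<in>A. q x * (x \<bullet> g)^2)"
  have L: "L > 0" unfolding L_def using K by simp
  have An: "A \<noteq> {}" using K by auto
  have v0: "0 \<le> v" unfolding v_def by (rule sum_nonneg) (use q0 in auto)
  have var: "(\<Sum>x\<in>A. q x * (x \<bullet> g - \<mu>)^2) \<le> v"
  proof -
    have "(\<Sum>x\<in>A. q x * (x \<bullet> g - \<mu>)^2) = v - 2 * \<mu> * \<mu> + \<mu>^2 * (\<Sum>x\<in>A. q x)"
      by (simp add: v_def \<mu>_def power2_diff algebra_simps sum.distrib sum_subtractf sum_distrib_left sum_distrib_right)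
    thus ?thesis using q1 by (simp add: power2_eq_square)
  qed
  have "0 \<le> ah_delta A q D g \<and> ah_delta A q D g \<le> B \<and> 2 * D * ah_delta A q D g \<le> L * v + 2/3 * L * B * ah_delta A q D g"
  proof (cases "D = 0")
    case True
    have fin: "finite ((\<lambda>x. x \<bullet> g) ` A)" "(\<lambda>x. x \<bullet> g) ` A \<noteq> {}" using A An by auto
    obtain x0 where x0: "x0 \<in> A" "x0 \<bullet> g = Max ((\<lambda>x. x \<bullet> g) ` A)"
      using Max_in[OF fin] by auto
    have dl: "ah_delta A q D g = Max ((\<lambda>x. x \<bullet> g) ` A) - \<mu>" unfolding ah_delta_def \<mu>_def using True by simp
    have "\<mu> \<le> (\<Sum>x\<in>A. q x * Max ((\<lambda>x. x \<bullet> g) ` A))" unfolding \<mu>_def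
      by (rule sum_mono) (use q0 fin in \<open>auto intro!: mult_left_mono\<close>)
    also have "\<dots> = Max ((\<lambda>x. x \<bullet> g) ` A)" using q1 by (simp add: sum_distrib_right[symmetric])
    finally have 1: "0 \<le> ah_delta A q D g" using dl by simp
    have 2: "ah_delta A q D g \<le> B" using dl gB x0 unfolding \<mu>_def by force
    have "0 \<le> L * v + 2/3 * L * B * ah_delta A q D g"
      using L v0 B 1 by (intro add_nonneg_nonneg mult_nonneg_nonneg) auto
    thus ?thesis using 1 2 True by simp
  next
    case False
    hence D0: "D > 0" using D by simp
    define \<eta> where "\<eta> = L / D"
    have eta: "\<eta> > 0" unfolding \<eta>_def using L D0 by simp
    define u where "u x = \<eta> * (x \<bullet> g - \<mu>)" for x
    define Z where "Z = (\<Sum>x\<in>A. q x * exp (u x))"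
    have "(\<Sum>x\<in>A. q x * u x) = \<eta> * ((\<Sum>x\<in>A. q x * (x \<bullet> g)) - \<mu> * (\<Sum>x\<in>A. q x))"
      by (simp add: u_def algebra_simps sum_subtractf sum_distrib_left sum_distrib_right)
    hence qu: "(\<Sum>x\<in>A. q x * u x) = 0" using q1 by (simp add: \<mu>_def)
    have ub: "\<forall>x\<in>A. u x \<le> \<eta> * B" unfolding u_def using gB eta by (auto simp: \<mu>_def intro: mult_left_mono)
    have b0: "0 \<le> \<eta> * B" using eta B by simp
    note bz = bern_Z[OF A q0 q1 qu ub b0]
    have dl: "ah_delta A q D g = ln Z / \<eta>"
      unfolding delta_pos_form[OF A K q0 q1 D0] Z_def u_def \<eta>_def L_def[symmetric] \<mu>_def[symmetric]
      by simp
    have Z1: "1 \<le> Z" using bz(1) by (simp add: Z_def)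
    have 1: "0 \<le> ah_delta A q D g" unfolding dl using Z1 eta by simp
    have "ln Z \<le> \<eta> * B" using bz(2) by (simp add: Z_def)
    hence 2: "ah_delta A q D g \<le> B" unfolding dl using eta by (simp add: divide_le_eq mult.commute)
    have "(\<Sum>x\<in>A. q x * (u x)^2) = \<eta>^2 * (\<Sum>x\<in>A. q x * (x \<bullet> g - \<mu>)^2)"
      by (simp add: u_def sum_distrib_left power_mult_distrib mult.left_commute)
    also have "\<dots> \<le> \<eta>^2 * v" using var by (simp add: mult_left_mono)
    finally have 3: "2 * ln Z * (1 - \<eta> * B / 3) \<le> \<eta>^2 * v" using bz(3) by (simp add: Z_def)
    have Dq: "D = L / \<eta>" unfolding \<eta>_def using L D0 by simp
    have "2 * D * ah_delta A q D g = 2 * D * (ln Z / \<eta>)" using dl by simp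
    also have "\<dots> = (L / \<eta>^2) * (2 * ln Z)"
      using Dq by (simp add: power2_eq_square)
    also have "\<dots> = (L / \<eta>^2) * (2 * ln Z * (1 - \<eta> * B / 3)) + 2/3 * L * B * (ln Z / \<eta>)"
      using eta by (simp add: field_simps power2_eq_square)
    also have "\<dots> \<le> (L / \<eta>^2) * (\<eta>^2 * v) + 2/3 * L * B * (ln Z / \<eta>)"
      using mult_left_mono[OF 3, of "L / \<eta>^2"] L eta by simp
    also have "\<dots> = L * v + 2/3 * L * B * ah_delta A q D g" unfolding dl using eta by simp
    finally show ?thesis using 1 2 by simp
  qed
  thus "0 \<le> ah_delta A q D g" "ah_delta A q D g \<le> B"
    "2 * D * ah_delta A q D g \<le> ln (real (card A)) * (\<Sum>x\<in>A. q x * (x \<bullet> g)^2)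
        + 2/3 * ln (real (card A)) * B * ah_delta A q D g"
    unfolding L_def v_def by auto
qed

definition pot :: "(real^'d) set \<Rightarrow> real \<Rightarrow> real^'d \<Rightarrow> real" where
  "pot A D S = (if D = 0 then Max ((\<lambda>x. x \<bullet> S) ` A)
     else (D / ln (real (card A))) * ln ((\<Sum>x\<in>A. exp (ln (real (card A)) / D * (x \<bullet> S))) / real (card A)))"

lemma lnsum_bounds:
  fixes f :: "'a \<Rightarrow> real"
  assumes A: "finite A" "A \<noteq> {}" and eta: "\<eta> > 0"
  shows "ln ((\<Sum>x\<in>A. exp (\<eta> * f x)) / real (card A)) \<le> \<eta> * Max (f ` A)"
    "\<eta> * Max (f ` A) - ln (real (card A)) \<le> ln ((\<Sum>x\<in>A. exp (\<eta> * f x)) / real (card A))"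
proof -
  have fin: "finite (f ` A)" "f ` A \<noteq> {}" using A by auto
  have K: "real (card A) > 0" using A by (simp add: card_gt_0_iff)
  have pos: "(\<Sum>x\<in>A. exp (\<eta> * f x)) > 0" by (rule sum_pos) (use A in auto)
  have "(\<Sum>x\<in>A. exp (\<eta> * f x)) \<le> (\<Sum>x\<in>A. exp (\<eta> * Max (f ` A)))"
    by (rule sum_mono) (use eta fin in auto)
  also have "\<dots> = real (card A) * exp (\<eta> * Max (f ` A))" by simp
  finally have "(\<Sum>x\<in>A. exp (\<eta> * f x)) / real (card A) \<le> exp (\<eta> * Max (f ` A))"
    using K by (simp add: divide_le_eq mult.commute)
  hence "ln ((\<Sum>x\<in>A. exp (\<eta> * f x)) / real (card A)) \<le> ln (exp (\<eta> * Max (f ` A)))"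
    using pos K by (subst ln_le_cancel_iff) auto
  thus "ln ((\<Sum>x\<in>A. exp (\<eta> * f x)) / real (card A)) \<le> \<eta> * Max (f ` A)" by simp
  obtain x0 where x0: "x0 \<in> A" "f x0 = Max (f ` A)" using Max_in[OF fin] by auto
  have "exp (\<eta> * Max (f ` A)) \<le> (\<Sum>x\<in>A. exp (\<eta> * f x))"
    using member_le_sum[of x0 A "\<lambda>x. exp (\<eta> * f x)"] x0 A by simp
  hence "ln (exp (\<eta> * Max (f ` A)) / real (card A)) \<le> ln ((\<Sum>x\<in>A. exp (\<eta> * f x)) / real (card A))"
    using pos K by (subst ln_le_cancel_iff) (auto simp: divide_right_mono)
  thus "\<eta> * Max (f ` A) - ln (real (card A)) \<le> ln ((\<Sum>x\<in>A. exp (\<eta> * f x)) / real (card A))"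
    using K by (simp add: ln_div)
qed

lemma pot_final:
  fixes A :: "(real^'d) set"
  assumes A: "finite A" and K: "card A \<ge> 2" and D: "0 \<le> D"
  shows "Max ((\<lambda>x. x \<bullet> S) ` A) - D \<le> pot A D S"
proof (cases "D = 0")
  case True thus ?thesis by (simp add: pot_def)
next
  case False
  define L where "L = ln (real (card A))"
  have L: "L > 0" unfolding L_def using K by simp
  have An: "A \<noteq> {}" using K by auto
  have D0: "D > 0" using D False by simp
  have eta: "L / D > 0" using L D0 by simp
  note b = lnsum_bounds(2)[OF A An eta, of "\<lambda>x. x \<bullet> S"]
  have "D / L * (L / D * Max ((\<lambda>x. x \<bullet> S) ` A) - L) \<le> D / L * ln ((\<Sum>x\<in>A. exp (L / D * (x \<bullet> S))) / real (card A))"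
    using b L D0 unfolding L_def[symmetric] by (intro mult_left_mono) auto
  moreover have "D / L * (L / D * Max ((\<lambda>x. x \<bullet> S) ` A) - L) = Max ((\<lambda>x. x \<bullet> S) ` A) - D"
    using L D0 by (simp add: field_simps)
  ultimately show ?thesis using False unfolding pot_def L_def by simp
qed

lemma pot_mono:
  fixes A :: "(real^'d) set"
  assumes A: "finite A" and K: "card A \<ge> 2" and D: "0 \<le> D" "D \<le> D'"
  shows "pot A D' S \<le> pot A D S"
proof -
  define L where "L = ln (real (card A))"
  have L: "L > 0" unfolding L_def using K by simp
  have An: "A \<noteq> {}" using K by auto
  have Kp: "real (card A) > 0" using K by simp
  show ?thesis
  proof (cases "D = 0")
    case True
    show ?thesis
    proof (cases "D' = 0")
      case True thus ?thesis using \<open>D = 0\<close> by simp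
    next
      case False
      hence D0: "D' > 0" using D by simp
      have eta: "L / D' > 0" using L D0 by simp
      note b = lnsum_bounds(1)[OF A An eta, of "\<lambda>x. x \<bullet> S"]
      have "D' / L * ln ((\<Sum>x\<in>A. exp (L / D' * (x \<bullet> S))) / real (card A)) \<le> D' / L * (L / D' * Max ((\<lambda>x. x \<bullet> S) ` A))"
        using b L D0 by (intro mult_left_mono) auto
      also have "\<dots> = Max ((\<lambda>x. x \<bullet> S) ` A)" using L D0 by simp
      finally show ?thesis using False True unfolding pot_def L_def by simp
    qed
  next
    case False
    hence D0: "D > 0" using D by simp
    hence D0': "D' > 0" using D by simp
    define \<eta> where "\<eta> = L / D"
    define \<eta>' where "\<eta>' = L / D'"
    define r where "r = D / D'"
    have eta: "\<eta> > 0" unfolding \<eta>_def using L D0 by simp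
    have r: "0 < r" "r \<le> 1" unfolding r_def using D0 D0' D by auto
    have reta: "r * \<eta> = \<eta>'" unfolding r_def \<eta>_def \<eta>'_def using D0 D0' by simp
    define c where "c = (\<Sum>x\<in>A. exp (\<eta> * (x \<bullet> S))) / real (card A)"
    have c: "c > 0" unfolding c_def using Kp by (intro divide_pos_pos sum_pos) (use An A in auto)
    have pt: "exp (\<eta>' * (x \<bullet> S)) \<le> (r * (exp (\<eta> * (x \<bullet> S)) / c) + (1 - r)) * exp (r * ln c)" for x
    proof -
      have "exp ((1 - r) *\<^sub>R 0 + r *\<^sub>R (\<eta> * (x \<bullet> S) - ln c)) \<le> (1 - r) * exp 0 + r * exp (\<eta> * (x \<bullet> S) - ln c)"
        by (rule convex_onD[OF exp_convex]) (use r in auto)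
      hence "exp (r * (\<eta> * (x \<bullet> S) - ln c)) \<le> (1 - r) + r * (exp (\<eta> * (x \<bullet> S)) / c)"
        using c by (simp add: exp_diff)
      hence "exp (r * (\<eta> * (x \<bullet> S) - ln c)) * exp (r * ln c) \<le> ((1 - r) + r * (exp (\<eta> * (x \<bullet> S)) / c)) * exp (r * ln c)"
        by (simp add: mult_right_mono)
      moreover have "exp (r * (\<eta> * (x \<bullet> S) - ln c)) * exp (r * ln c) = exp (\<eta>' * (x \<bullet> S))"
        using reta by (simp flip: exp_add add: algebra_simps)
      ultimately show ?thesis by (simp add: algebra_simps)
    qed
    have "(\<Sum>x\<in>A. exp (\<eta>' * (x \<bullet> S))) \<le> (\<Sum>x\<in>A. (r * (exp (\<eta> * (x \<bullet> S)) / c) + (1 - r)) * exp (r * ln c))"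
      by (rule sum_mono) (rule pt)
    also have "\<dots> = (\<Sum>x\<in>A. (r / c * exp (r * ln c)) * exp (\<eta> * (x \<bullet> S)) + (1 - r) * exp (r * ln c))"
      by (rule sum.cong) (auto simp: algebra_simps)
    also have "\<dots> = (r / c * exp (r * ln c)) * (\<Sum>x\<in>A. exp (\<eta> * (x \<bullet> S))) + real (card A) * ((1 - r) * exp (r * ln c))"
      by (simp add: sum.distrib sum_distrib_left)
    also have "\<dots> = (r / c * (\<Sum>x\<in>A. exp (\<eta> * (x \<bullet> S))) + real (card A) * (1 - r)) * exp (r * ln c)"
      by (simp add: algebra_simps)
    also have "r / c * (\<Sum>x\<in>A. exp (\<eta> * (x \<bullet> S))) = r * real (card A)"
      using c Kp unfolding c_def by (simp add: field_simps)
    finally have "(\<Sum>x\<in>A. exp (\<eta>' * (x \<bullet> S))) / real (card A) \<le> exp (r * ln c)"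
      using Kp by (simp add: divide_le_eq algebra_simps)
    moreover have "(\<Sum>x\<in>A. exp (\<eta>' * (x \<bullet> S))) > 0" by (rule sum_pos) (use A An in auto)
    ultimately have "ln ((\<Sum>x\<in>A. exp (\<eta>' * (x \<bullet> S))) / real (card A)) \<le> ln (exp (r * ln c))"
      using Kp by (subst ln_le_cancel_iff) auto
    hence "ln ((\<Sum>x\<in>A. exp (\<eta>' * (x \<bullet> S))) / real (card A)) \<le> r * ln c" by simp
    hence "D' / L * ln ((\<Sum>x\<in>A. exp (\<eta>' * (x \<bullet> S))) / real (card A)) \<le> D' / L * (r * ln c)"
      using L D0' by (intro mult_left_mono) auto
    also have "D' / L * (r * ln c) = D / L * ln c" unfolding r_def using D0' by simp
    finally show ?thesis using D0 D0' unfolding pot_def L_def[symmetric] c_def \<eta>_def \<eta>'_def by simp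
  qed
qed

lemma pot_step:
  fixes A :: "(real^'d) set"
  assumes A: "finite A" and K: "card A \<ge> 2" and D: "0 \<le> D"
  shows "pot A D (S + g) - pot A D S \<le> (\<Sum>x\<in>A. ah_q A S D x * (x \<bullet> g)) + ah_delta A (ah_q A S D) D g"
proof (cases "D = 0")
  case True
  have An: "A \<noteq> {}" using K by auto
  have fin: "finite ((\<lambda>x. x \<bullet> S) ` A)" "finite ((\<lambda>x. x \<bullet> g) ` A)" using A by auto
  have "Max ((\<lambda>x. x \<bullet> (S + g)) ` A) \<le> Max ((\<lambda>x. x \<bullet> S) ` A) + Max ((\<lambda>x. x \<bullet> g) ` A)"
  proof (subst Max_le_iff)
    show "finite ((\<lambda>x. x \<bullet> (S + g)) ` A)" "(\<lambda>x. x \<bullet> (S + g)) ` A \<noteq> {}" using A An by auto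
    show "\<forall>a\<in>(\<lambda>x. x \<bullet> (S + g)) ` A. a \<le> Max ((\<lambda>x. x \<bullet> S) ` A) + Max ((\<lambda>x. x \<bullet> g) ` A)"
    proof
      fix a assume "a \<in> (\<lambda>x. x \<bullet> (S + g)) ` A"
      then obtain x where x: "x \<in> A" "a = x \<bullet> S + x \<bullet> g" by (auto simp: inner_add_right)
      have "x \<bullet> S \<le> Max ((\<lambda>x. x \<bullet> S) ` A)" "x \<bullet> g \<le> Max ((\<lambda>x. x \<bullet> g) ` A)"
        using fin x by auto
      thus "a \<le> Max ((\<lambda>x. x \<bullet> S) ` A) + Max ((\<lambda>x. x \<bullet> g) ` A)" using x by simp
    qed
  qed
  thus ?thesis using True unfolding pot_def ah_delta_def by simp
next
  case False
  define L where "L = ln (real (card A))"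
  have L: "L > 0" unfolding L_def using K by simp
  have An: "A \<noteq> {}" using K by auto
  have Kp: "real (card A) > 0" using K by simp
  have D0: "D > 0" using D False by simp
  define \<eta> where "\<eta> = L / D"
  define W where "W = (\<Sum>b\<in>A. exp (\<eta> * (b \<bullet> S)))"
  define W' where "W' = (\<Sum>b\<in>A. exp (\<eta> * (b \<bullet> (S + g))))"
  have W: "W > 0" unfolding W_def by (rule sum_pos) (use A An in auto)
  have W': "W' > 0" unfolding W'_def by (rule sum_pos) (use A An in auto)
  have q: "ah_q A S D x = exp (\<eta> * (x \<bullet> S)) / W" for x
    unfolding ah_q_def W_def \<eta>_def L_def using False by simp
  have "(\<Sum>x\<in>A. ah_q A S D x * exp (\<eta> * (x \<bullet> g))) = (\<Sum>x\<in>A. exp (\<eta> * (x \<bullet> (S + g)))) / W"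
    unfolding q sum_divide_distrib
    by (rule sum.cong) (simp_all add: inner_add_right distrib_left exp_add)
  hence e: "(\<Sum>x\<in>A. ah_q A S D x * exp (\<eta> * (x \<bullet> g))) = W' / W" by (simp add: W'_def)
  have "(\<Sum>x\<in>A. ah_q A S D x * (x \<bullet> g)) + ah_delta A (ah_q A S D) D g = D / L * ln (W' / W)"
    unfolding ah_delta_def using False e by (simp add: L_def[symmetric] \<eta>_def[symmetric])
  also have "\<dots> = D / L * ln (W' / real (card A)) - D / L * ln (W / real (card A))"
    using W W' Kp by (simp add: ln_div algebra_simps)
  also have "\<dots> = pot A D (S + g) - pot A D S"
    unfolding pot_def using False by (simp add: L_def[symmetric] \<eta>_def[symmetric] W_def W'_def)
  finally show ?thesis by simp
qed

lemma delta_nonneg: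
  fixes A :: "(real^'d) set" and q :: "real^'d \<Rightarrow> real"
  assumes A: "finite A" and K: "card A \<ge> 2" and q0: "\<forall>x\<in>A. q x \<ge> 0" and q1: "(\<Sum>x\<in>A. q x) = 1"
    and D: "D \<ge> 0"
  shows "0 \<le> ah_delta A q D g"
proof -
  define B where "B = (\<Sum>x\<in>A. \<bar>x \<bullet> g - (\<Sum>x\<in>A. q x * (x \<bullet> g))\<bar>)"
  have "\<forall>x\<in>A. x \<bullet> g - (\<Sum>x\<in>A. q x * (x \<bullet> g)) \<le> B"
  proof
    fix x assume "x \<in> A"
    hence "\<bar>x \<bullet> g - (\<Sum>x\<in>A. q x * (x \<bullet> g))\<bar> \<le> B"
      unfolding B_def by (rule member_le_sum[OF _ _ A, of x "\<lambda>x. \<bar>x \<bullet> g - (\<Sum>x\<in>A. q x * (x \<bullet> g))\<bar>"]) auto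
    thus "x \<bullet> g - (\<Sum>x\<in>A. q x * (x \<bullet> g)) \<le> B" by simp
  qed
  moreover have "B \<ge> 0" unfolding B_def by (rule sum_nonneg) auto
  ultimately show ?thesis using delta_bounds(1)[OF A K q0 q1 D] by blast
qed

lemma quad_root:
  fixes x a c :: real
  assumes "x \<ge> 0" "a \<ge> 0" "c \<ge> 0" "x^2 \<le> a + c * x"
  shows "x \<le> sqrt a + c"
proof (rule ccontr)
  assume "\<not> x \<le> sqrt a + c"
  hence h: "x > sqrt a + c" by simp
  have sa: "sqrt a \<ge> 0" "sqrt a * sqrt a = a" using assms by auto
  have x0: "x > 0" using h sa assms by linarith
  have "x * x > (sqrt a + c) * x" using h x0 by (intro mult_strict_right_mono) auto
  hence "x^2 - c * x > sqrt a * x" by (simp add: power2_eq_square algebra_simps)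
  moreover have "sqrt a * x \<ge> sqrt a * (sqrt a + c)" using h sa by (intro mult_left_mono) auto
  moreover have "sqrt a * (sqrt a + c) \<ge> a" using sa assms by (simp add: algebra_simps)
  ultimately show False using assms by linarith
qed

context
  fixes A :: "(real^'d) set" and st :: "nat \<Rightarrow> (real^'d) \<times> real" and Y :: "nat \<Rightarrow> real^'d"
  assumes A: "finite A" and K: "card A \<ge> 2"
    and st0: "st 0 = (0, 0)"
    and stS: "\<And>t. st (Suc t) = (fst (st t) + Y (Suc t),
        snd (st t) + ah_delta A (ah_q A (fst (st t)) (snd (st t))) (snd (st t)) (Y (Suc t)))"
begin

lemma st_D_nonneg: "0 \<le> snd (st t)"
proof (induction t)
  case 0 thus ?case by (simp add: st0)
next
  case (Suc t)
  have An: "A \<noteq> {}" using K by auto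
  note qd = q_dist[OF A An, of "fst (st t)" "snd (st t)"]
  show ?case unfolding stS using Suc delta_nonneg[OF A K qd Suc] by simp
qed

lemma st_D_mono: "snd (st t) \<le> snd (st (Suc t))"
proof -
  have An: "A \<noteq> {}" using K by auto
  note qd = q_dist[OF A An, of "fst (st t)" "snd (st t)"]
  show ?thesis unfolding stS using delta_nonneg[OF A K qd st_D_nonneg] by simp
qed

lemma st_S: "fst (st t) = (\<Sum>s\<in>{1..t}. Y s)"
  by (induction t) (simp_all add: st0 stS add.commute)

lemma st_pot: "pot A (snd (st t)) (fst (st t)) \<le>
    (\<Sum>s\<in>{1..t}. (\<Sum>x\<in>A. ah_q A (fst (st (s-1))) (snd (st (s-1))) x * (x \<bullet> Y s))) + snd (st t)"
proof (induction t)
  case 0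
  have An: "A \<noteq> {}" using K by auto
  hence "(\<lambda>x. x \<bullet> (0::real^'d)) ` A = {0}" by auto
  thus ?case by (simp add: st0 pot_def)
next
  case (Suc t)
  let ?S = "fst (st t)" and ?D = "snd (st t)"
  have "pot A (snd (st (Suc t))) (fst (st (Suc t))) \<le> pot A ?D (fst (st (Suc t)))"
    by (rule pot_mono[OF A K st_D_nonneg st_D_mono])
  also have "\<dots> = pot A ?D (?S + Y (Suc t))" by (simp add: stS)
  also have "\<dots> \<le> pot A ?D ?S + ((\<Sum>x\<in>A. ah_q A ?S ?D x * (x \<bullet> Y (Suc t))) + ah_delta A (ah_q A ?S ?D) ?D (Y (Suc t)))"
    using pot_step[OF A K st_D_nonneg[of t], of ?S "Y (Suc t)"] by simp
  also have "\<dots> \<le> (\<Sum>s\<in>{1..Suc t}. (\<Sum>x\<in>A. ah_q A (fst (st (s-1))) (snd (st (s-1))) x * (x \<bullet> Y s))) + snd (st (Suc t))"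
    using Suc by (simp add: stS)
  finally show ?case .
qed

lemma st_regret: "Max ((\<lambda>x. x \<bullet> fst (st t)) ` A) -
    (\<Sum>s\<in>{1..t}. (\<Sum>x\<in>A. ah_q A (fst (st (s-1))) (snd (st (s-1))) x * (x \<bullet> Y s))) \<le> 2 * snd (st t)"
  using pot_final[OF A K st_D_nonneg[of t], of "fst (st t)"] st_pot[of t] by simp

lemma st_quad:
  assumes B: "B \<ge> 0"
    and hB: "\<forall>s\<in>{1..t}. \<forall>x\<in>A. x \<bullet> Y s - (\<Sum>x\<in>A. ah_q A (fst (st (s-1))) (snd (st (s-1))) x * (x \<bullet> Y s)) \<le> B"
  shows "(snd (st t))^2 \<le> ln (real (card A)) *
      (\<Sum>s\<in>{1..t}. (\<Sum>x\<in>A. ah_q A (fst (st (s-1))) (snd (st (s-1))) x * (x \<bullet> Y s)^2))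
     + (2/3 * ln (real (card A)) + 1) * B * snd (st t)"
  using hB
proof (induction t)
  case 0 thus ?case by (simp add: st0)
next
  case (Suc t)
  let ?S = "fst (st t)" and ?D = "snd (st t)"
  let ?q = "ah_q A ?S ?D"
  let ?\<delta> = "ah_delta A ?q ?D (Y (Suc t))"
  define L where "L = ln (real (card A))"
  have An: "A \<noteq> {}" using K by auto
  note qd = q_dist[OF A An, of ?S ?D]
  have hB': "\<forall>x\<in>A. x \<bullet> Y (Suc t) - (\<Sum>x\<in>A. ?q x * (x \<bullet> Y (Suc t))) \<le> B"
    using bspec[OF Suc.prems, of "Suc t"] by simp
  note db = delta_bounds[OF A K qd st_D_nonneg B hB']
  have IH: "?D^2 \<le> L * (\<Sum>s\<in>{1..t}. (\<Sum>x\<in>A. ah_q A (fst (st (s-1))) (snd (st (s-1))) x * (x \<bullet> Y s)^2))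
     + (2/3 * L + 1) * B * ?D"
    using Suc.IH Suc.prems unfolding L_def by auto
  have dd: "?\<delta> * ?\<delta> \<le> B * ?\<delta>" using db(1,2) by (simp add: mult_right_mono)
  have "(snd (st (Suc t)))^2 = ?D^2 + 2 * ?D * ?\<delta> + ?\<delta> * ?\<delta>"
    by (simp add: stS power2_eq_square algebra_simps)
  also have "\<dots> \<le> L * (\<Sum>s\<in>{1..Suc t}. (\<Sum>x\<in>A. ah_q A (fst (st (s-1))) (snd (st (s-1))) x * (x \<bullet> Y s)^2))
     + (2/3 * L + 1) * B * snd (st (Suc t))"
  proof -
    define Vt where "Vt = (\<Sum>s\<in>{1..t}. (\<Sum>x\<in>A. ah_q A (fst (st (s-1))) (snd (st (s-1))) x * (x \<bullet> Y s)^2))"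
    define v where "v = (\<Sum>x\<in>A. ?q x * (x \<bullet> Y (Suc t))^2)"
    have sv: "(\<Sum>s\<in>{1..Suc t}. (\<Sum>x\<in>A. ah_q A (fst (st (s-1))) (snd (st (s-1))) x * (x \<bullet> Y s)^2)) = Vt + v"
      unfolding Vt_def v_def by (simp add: sum.cl_ivl_Suc)
    have D1: "snd (st (Suc t)) = ?D + ?\<delta>" by (simp add: stS)
    have e: "L * (Vt + v) + (2/3 * L + 1) * B * (?D + ?\<delta>) =
       (L * Vt + (2/3 * L + 1) * B * ?D) + (L * v + 2/3 * L * B * ?\<delta>) + B * ?\<delta>"
      by (simp add: algebra_simps)
    have i1: "?D^2 \<le> L * Vt + (2/3 * L + 1) * B * ?D" using IH unfolding Vt_def .
    have i2: "2 * ?D * ?\<delta> \<le> L * v + 2/3 * L * B * ?\<delta>" using db(3) unfolding v_def L_def .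
    show ?thesis unfolding sv D1 e using i1 i2 dd by linarith
  qed
  finally show ?case unfolding L_def .
qed

lemma st_D_bound:
  assumes B: "B \<ge> 0"
    and hB: "\<forall>s\<in>{1..t}. \<forall>x\<in>A. x \<bullet> Y s - (\<Sum>x\<in>A. ah_q A (fst (st (s-1))) (snd (st (s-1))) x * (x \<bullet> Y s)) \<le> B"
  shows "snd (st t) \<le> sqrt (ln (real (card A)) *
      (\<Sum>s\<in>{1..t}. (\<Sum>x\<in>A. ah_q A (fst (st (s-1))) (snd (st (s-1))) x * (x \<bullet> Y s)^2)))
     + (2/3 * ln (real (card A)) + 1) * B"
proof (rule quad_root[OF st_D_nonneg _ _ st_quad[OF B hB]])
  have An: "A \<noteq> {}" using K by auto
  have L: "ln (real (card A)) \<ge> 0" using K by simp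
  have h: "(\<Sum>x\<in>A. ah_q A (fst (st (s-1))) (snd (st (s-1))) x * (x \<bullet> Y s)^2) \<ge> 0" for s
    using q_dist(1)[OF A An] by (intro sum_nonneg) auto
  have "0 \<le> (\<Sum>s\<in>{1..t}. (\<Sum>x\<in>A. ah_q A (fst (st (s-1))) (snd (st (s-1))) x * (x \<bullet> Y s)^2))"
    by (rule sum_nonneg) (rule h)
  thus "0 \<le> ln (real (card A)) * (\<Sum>s\<in>{1..t}. (\<Sum>x\<in>A. ah_q A (fst (st (s-1))) (snd (st (s-1))) x * (x \<bullet> Y s)^2))"
    using L by simp
  show "0 \<le> (2/3 * ln (real (card A)) + 1) * B" using L B by simp
qed

end



definition EE :: "(nat \<Rightarrow> (nat \<Rightarrow> 'a) \<Rightarrow> 'a \<Rightarrow> real) \<Rightarrow> 'a set \<Rightarrow> nat \<Rightarrow> ((nat \<Rightarrow> 'a) \<Rightarrow> real) \<Rightarrow> real" where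
  "EE P A T F = (\<Sum>X\<in>PiE {1..T} (\<lambda>_. A). (\<Prod>t\<in>{1..T}. P t X (X t)) * F X)"

lemma inj_upd_PiE:
  "inj_on (\<lambda>(y, g). g(Suc T := y)) (A \<times> PiE {1..T} (\<lambda>_. B))"
proof (rule inj_onI)
  fix p p' assume p: "p \<in> A \<times> PiE {1..T} (\<lambda>_. B)" and p': "p' \<in> A \<times> PiE {1..T} (\<lambda>_. B)"
    and e0: "(\<lambda>(y, g). g(Suc T := y)) p = (\<lambda>(y, g). g(Suc T := y)) p'"
  obtain y g where pg: "p = (y, g)" by (cases p)
  obtain y' g' where pg': "p' = (y', g')" by (cases p')
  have g: "g \<in> PiE {1..T} (\<lambda>_. B)" using p pg by simp
  have g': "g' \<in> PiE {1..T} (\<lambda>_. B)" using p' pg' by simp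
  have e: "g(Suc T := y) = g'(Suc T := y')" using e0 pg pg' by simp
  have "y = y'" using fun_cong[OF e, of "Suc T"] by simp
  moreover have "g = g'"
  proof
    fix s show "g s = g' s"
    proof (cases "s = Suc T")
      case True
      hence ns: "s \<notin> {1..T}" by simp
      have "g s = undefined" by (rule PiE_arb[OF g ns])
      moreover have "g' s = undefined" by (rule PiE_arb[OF g' ns])
      ultimately show ?thesis by simp
    next
      case False
      have "(g(Suc T := y)) s = (g'(Suc T := y')) s" using e by simp
      thus ?thesis using False by simp
    qed
  qed
  ultimately show "p = p'" using pg pg' by simp
qed

lemma EE_Suc:
  assumes dep: "\<And>t X X'. (\<forall>s<t. X s = X' s) \<Longrightarrow> P t X = P t X'"
  shows "EE P A (Suc T) F = EE P A T (\<lambda>X. \<Sum>a\<in>A. P (Suc T) X a * F (X(Suc T := a)))"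
proof -
  have iv: "{1..Suc T} = insert (Suc T) {1..T}" by auto
  have "EE P A (Suc T) F = (\<Sum>X\<in>(\<lambda>(y, g). g(Suc T := y)) ` (A \<times> PiE {1..T} (\<lambda>_. A)).
      (\<Prod>t\<in>{1..Suc T}. P t X (X t)) * F X)"
    unfolding EE_def iv PiE_insert_eq by simp
  also have "\<dots> = (\<Sum>(y, g)\<in>A \<times> PiE {1..T} (\<lambda>_. A).
      (\<Prod>t\<in>{1..Suc T}. P t (g(Suc T := y)) ((g(Suc T := y)) t)) * F (g(Suc T := y)))"
    by (subst sum.reindex[OF inj_upd_PiE]) (simp add: case_prod_unfold)
  also have "\<dots> = (\<Sum>y\<in>A. \<Sum>g\<in>PiE {1..T} (\<lambda>_. A).
      (\<Prod>t\<in>{1..Suc T}. P t (g(Suc T := y)) ((g(Suc T := y)) t)) * F (g(Suc T := y)))"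
    by (simp add: sum.cartesian_product)
  also have "\<dots> = (\<Sum>g\<in>PiE {1..T} (\<lambda>_. A). \<Sum>y\<in>A.
      (\<Prod>t\<in>{1..Suc T}. P t (g(Suc T := y)) ((g(Suc T := y)) t)) * F (g(Suc T := y)))"
    by (rule sum.swap)
  also have "\<dots> = (\<Sum>g\<in>PiE {1..T} (\<lambda>_. A). (\<Prod>t\<in>{1..T}. P t g (g t)) *
      (\<Sum>y\<in>A. P (Suc T) g y * F (g(Suc T := y))))"
  proof (rule sum.cong[OF refl])
    fix g assume g: "g \<in> PiE {1..T} (\<lambda>_. A)"
    have pe: "(\<Prod>t\<in>{1..Suc T}. P t (g(Suc T := y)) ((g(Suc T := y)) t)) =
        P (Suc T) g y * (\<Prod>t\<in>{1..T}. P t g (g t))" for y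
    proof -
      have "(\<Prod>t\<in>{1..Suc T}. P t (g(Suc T := y)) ((g(Suc T := y)) t)) =
          P (Suc T) (g(Suc T := y)) y * (\<Prod>t\<in>{1..T}. P t (g(Suc T := y)) ((g(Suc T := y)) t))"
        unfolding iv by (subst prod.insert) auto
      also have "P (Suc T) (g(Suc T := y)) = P (Suc T) g" by (rule dep) simp
      also have "(\<Prod>t\<in>{1..T}. P t (g(Suc T := y)) ((g(Suc T := y)) t)) = (\<Prod>t\<in>{1..T}. P t g (g t))"
      proof (rule prod.cong[OF refl])
        fix t assume t: "t \<in> {1..T}"
        have "P t (g(Suc T := y)) = P t g" by (rule dep) (use t in auto)
        thus "P t (g(Suc T := y)) ((g(Suc T := y)) t) = P t g (g t)" using t by simp
      qed
      finally show ?thesis .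
    qed
    show "(\<Sum>y\<in>A. (\<Prod>t\<in>{1..Suc T}. P t (g(Suc T := y)) ((g(Suc T := y)) t)) * F (g(Suc T := y))) =
        (\<Prod>t\<in>{1..T}. P t g (g t)) * (\<Sum>y\<in>A. P (Suc T) g y * F (g(Suc T := y)))"
      unfolding pe sum_distrib_left by (rule sum.cong[OF refl]) (simp only: ac_simps)
  qed
  also have "\<dots> = EE P A T (\<lambda>X. \<Sum>a\<in>A. P (Suc T) X a * F (X(Suc T := a)))"
    unfolding EE_def ..
  finally show ?thesis .
qed

lemma EE_indep:
  assumes dep: "\<And>t X X'. (\<forall>s<t. X s = X' s) \<Longrightarrow> P t X = P t X'"
    and P1: "\<And>t X. (\<Sum>a\<in>A. P t X a) = 1"
    and Fd: "\<And>X X'. (\<forall>s\<le>t. X s = X' s) \<Longrightarrow> F X = F X'"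
    and tT: "t \<le> T"
  shows "EE P A T F = EE P A t F"
  using tT
proof (induction T rule: dec_induct)
  case base thus ?case by simp
next
  case (step T)
  have "EE P A (Suc T) F = EE P A T (\<lambda>X. \<Sum>a\<in>A. P (Suc T) X a * F (X(Suc T := a)))"
    by (rule EE_Suc[OF dep])
  also have "\<dots> = EE P A T F"
  proof -
    have "(\<Sum>a\<in>A. P (Suc T) X a * F (X(Suc T := a))) = F X" for X
    proof -
      have "F (X(Suc T := a)) = F X" for a
      proof -
        have "\<forall>s\<le>t. (X(Suc T := a)) s = X s" using \<open>t \<le> T\<close> by simp
        thus ?thesis by (rule Fd)
      qed
      hence "(\<Sum>a\<in>A. P (Suc T) X a * F (X(Suc T := a))) = (\<Sum>a\<in>A. P (Suc T) X a) * F X"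
        by (simp add: sum_distrib_right)
      thus ?thesis using P1 by simp
    qed
    thus ?thesis by simp
  qed
  finally show ?case using step by simp
qed

lemma EE_zero: "EE P A 0 F = F (\<lambda>_. undefined)"
  unfolding EE_def by simp

lemma EE_const:
  assumes dep: "\<And>t X X'. (\<forall>s<t. X s = X' s) \<Longrightarrow> P t X = P t X'"
    and P1: "\<And>t X. (\<Sum>a\<in>A. P t X a) = 1"
  shows "EE P A T (\<lambda>_. c) = c"
  using EE_indep[OF dep P1, where t=0 and F="\<lambda>_. c" and T=T] EE_zero by simp

lemma EE_step:
  assumes dep: "\<And>t X X'. (\<forall>s<t. X s = X' s) \<Longrightarrow> P t X = P t X'"
    and P1: "\<And>t X. (\<Sum>a\<in>A. P t X a) = 1"
    and Gd: "\<And>X X' a. (\<forall>s<t. X s = X' s) \<Longrightarrow> G X a = G X' a"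
    and t: "1 \<le> t" "t \<le> T"
  shows "EE P A T (\<lambda>X. G X (X t)) = EE P A T (\<lambda>X. \<Sum>a\<in>A. P t X a * G X a)"
proof -
  obtain t' where t': "t = Suc t'" using t by (cases t) auto
  have S: "EE P A t H = EE P A t' (\<lambda>X. \<Sum>b\<in>A. P t X b * H (X(t := b)))" for H
    unfolding t' by (rule EE_Suc[OF dep])
  have d1: "(\<lambda>X. G X (X t)) X = (\<lambda>X. G X (X t)) X'" if "\<forall>s\<le>t. X s = X' s" for X X'
    using Gd[of X X' "X t"] that by auto
  have d2: "(\<lambda>X. \<Sum>a\<in>A. P t X a * G X a) X = (\<lambda>X. \<Sum>a\<in>A. P t X a * G X a) X'"
    if "\<forall>s<t. X s = X' s" for X X'
    using Gd[of X X'] dep[of t X X'] that by auto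
  have e1: "(\<Sum>b\<in>A. P t X b * G (X(t := b)) ((X(t := b)) t)) = (\<Sum>a\<in>A. P t X a * G X a)" for X
  proof (rule sum.cong[OF refl])
    fix b have "G (X(t := b)) b = G X b" by (rule Gd) auto
    thus "P t X b * G (X(t := b)) ((X(t := b)) t) = P t X b * G X b" by simp
  qed
  have e2: "(\<Sum>b\<in>A. P t X b * (\<Sum>a\<in>A. P t (X(t := b)) a * G (X(t := b)) a)) = (\<Sum>a\<in>A. P t X a * G X a)" for X
  proof -
    have "(\<Sum>a\<in>A. P t (X(t := b)) a * G (X(t := b)) a) = (\<Sum>a\<in>A. P t X a * G X a)" for b
      using d2[of "X(t := b)" X] by auto
    hence "(\<Sum>b\<in>A. P t X b * (\<Sum>a\<in>A. P t (X(t := b)) a * G (X(t := b)) a)) = (\<Sum>b\<in>A. P t X b) * (\<Sum>a\<in>A. P t X a * G X a)"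
      by (simp add: sum_distrib_right)
    thus ?thesis using P1[of t X] by simp
  qed
  have "EE P A T (\<lambda>X. G X (X t)) = EE P A t (\<lambda>X. G X (X t))"
    by (rule EE_indep[OF dep P1 d1 t(2)])
  also have "\<dots> = EE P A t' (\<lambda>X. \<Sum>a\<in>A. P t X a * G X a)"
    unfolding S e1 ..
  also have "\<dots> = EE P A t (\<lambda>X. \<Sum>a\<in>A. P t X a * G X a)"
    unfolding S e2 ..
  also have "\<dots> = EE P A T (\<lambda>X. \<Sum>a\<in>A. P t X a * G X a)"
  proof (rule EE_indep[OF dep P1 _ t(2), symmetric])
    fix X X' :: "nat \<Rightarrow> 'a" assume "\<forall>s\<le>t. X s = X' s"
    hence "\<forall>s<t. X s = X' s" by auto
    from d2[OF this] show "(\<Sum>a\<in>A. P t X a * G X a) = (\<Sum>a\<in>A. P t X' a * G X' a)" by simp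
  qed
  finally show ?thesis .
qed

lemma EE_add: "EE P A T (\<lambda>X. F X + G X) = EE P A T F + EE P A T G"
  unfolding EE_def by (simp add: algebra_simps sum.distrib)

lemma EE_diff: "EE P A T (\<lambda>X. F X - G X) = EE P A T F - EE P A T G"
  unfolding EE_def by (simp add: algebra_simps sum_subtractf)

lemma EE_cmult: "EE P A T (\<lambda>X. c * F X) = c * EE P A T F"
  unfolding EE_def by (simp add: sum_distrib_left mult.left_commute)

lemma EE_sum: "EE P A T (\<lambda>X. \<Sum>i\<in>I. F i X) = (\<Sum>i\<in>I. EE P A T (F i))"
  unfolding EE_def sum_distrib_left by (rule sum.swap)

lemma EE_mono:
  assumes P0: "\<And>t X a. a \<in> A \<Longrightarrow> P t X a \<ge> 0"
    and FG: "\<And>X. X \<in> PiE {1..T} (\<lambda>_. A) \<Longrightarrow> F X \<le> G X"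
  shows "EE P A T F \<le> EE P A T G"
  unfolding EE_def
proof (rule sum_mono)
  fix X assume X: "X \<in> PiE {1..T} (\<lambda>_. A)"
  have "0 \<le> (\<Prod>t\<in>{1..T}. P t X (X t))"
  proof (rule prod_nonneg)
    fix t assume "t \<in> {1..T}"
    hence "X t \<in> A" using X by (auto simp: PiE_iff)
    thus "0 \<le> P t X (X t)" by (rule P0)
  qed
  thus "(\<Prod>t\<in>{1..T}. P t X (X t)) * F X \<le> (\<Prod>t\<in>{1..T}. P t X (X t)) * G X"
    using FG[OF X] by (simp add: mult_left_mono)
qed



lemma state_dep:
  "(\<forall>s\<in>{1..t}. X s = X' s) \<Longrightarrow> ah_state A \<pi> \<gamma> y X t = ah_state A \<pi> \<gamma> y X' t"
proof (induction t)
  case 0 show ?case by simp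
next
  case (Suc t)
  have "ah_state A \<pi> \<gamma> y X t = ah_state A \<pi> \<gamma> y X' t" using Suc by auto
  moreover have "X (Suc t) = X' (Suc t)" using Suc.prems by auto
  ultimately show ?case by (simp add: Let_def)
qed

lemma pt_dep:
  "(\<forall>s<t. X s = X' s) \<Longrightarrow> ah_pt A \<pi> \<gamma> y X t = ah_pt A \<pi> \<gamma> y X' t"
proof -
  assume h: "\<forall>s<t. X s = X' s"
  have "ah_state A \<pi> \<gamma> y X (t - 1) = ah_state A \<pi> \<gamma> y X' (t - 1)"
    by (rule state_dep) (use h in auto)
  thus ?thesis unfolding ah_pt_def by (simp add: fun_eq_iff)
qed

lemma state_rec:
  "ah_state A \<pi> \<gamma> y X (Suc t) =
    (fst (ah_state A \<pi> \<gamma> y X t) + ah_yhat A (ah_pt A \<pi> \<gamma> y X (Suc t)) (X (Suc t)) (y (Suc t)),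
     snd (ah_state A \<pi> \<gamma> y X t) + ah_delta A (ah_q A (fst (ah_state A \<pi> \<gamma> y X t)) (snd (ah_state A \<pi> \<gamma> y X t)))
        (snd (ah_state A \<pi> \<gamma> y X t)) (ah_yhat A (ah_pt A \<pi> \<gamma> y X (Suc t)) (X (Suc t)) (y (Suc t))))"
proof -
  obtain S D where SD: "ah_state A \<pi> \<gamma> y X t = (S, D)" by (cases "ah_state A \<pi> \<gamma> y X t")
  have "ah_pt A \<pi> \<gamma> y X (Suc t) = ah_p A \<pi> (\<gamma> (Suc t)) S D"
    by (simp add: ah_pt_def fun_eq_iff SD)
  thus ?thesis by (simp add: Let_def SD)
qed

lemma gamma_facts:
  fixes A :: "(real^'d) set"
  assumes K: "card A \<ge> 2" and t: "t \<ge> 1"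
  shows "0 < ah_gamma A t" "ah_gamma A t \<le> 1/2"
    "ah_gamma A t \<le> sqrt (5/2 * real CARD('d) * ln (real (card A))) / sqrt (real t)"
    "1 / ah_gamma A t \<le> 2 + sqrt (real t) / sqrt (5/2 * real CARD('d) * ln (real (card A)))"
proof -
  define g0 where "g0 = sqrt (5/2 * real CARD('d) * ln (real (card A)))"
  have L: "ln (real (card A)) > 0" using K by simp
  have g0: "g0 > 0" unfolding g0_def using L by simp
  have st: "sqrt (real t) > 0" using t by simp
  have gd: "ah_gamma A t = min (1/2) (g0 / sqrt (real t))" unfolding ah_gamma_def g0_def by simp
  show "0 < ah_gamma A t" unfolding gd using g0 st by simp
  show "ah_gamma A t \<le> 1/2" unfolding gd by (rule min.cobounded1)
  show "ah_gamma A t \<le> sqrt (5/2 * real CARD('d) * ln (real (card A))) / sqrt (real t)"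
    unfolding gd g0_def by simp
  show "1 / ah_gamma A t \<le> 2 + sqrt (real t) / sqrt (5/2 * real CARD('d) * ln (real (card A)))"
  proof (cases "1/2 \<le> g0 / sqrt (real t)")
    case True
    hence "ah_gamma A t = 1/2" unfolding gd by simp
    hence "1 / ah_gamma A t = 2" by (simp only:) simp
    moreover have "0 \<le> sqrt (real t) / g0" using g0 st by simp
    ultimately show ?thesis unfolding g0_def by linarith
  next
    case False
    hence "ah_gamma A t = g0 / sqrt (real t)" unfolding gd by simp
    thus ?thesis using g0 st unfolding g0_def[symmetric] by simp
  qed
qed

lemma gamma_anti:
  fixes A :: "(real^'d) set"
  assumes "1 \<le> s" "s \<le> t" and K: "card A \<ge> 2"
  shows "ah_gamma A t \<le> ah_gamma A s"
proof -
  have "sqrt (5/2 * real CARD('d) * ln (real (card A))) / sqrt (real t) \<le>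
        sqrt (5/2 * real CARD('d) * ln (real (card A))) / sqrt (real s)"
    using assms by (intro divide_left_mono) (auto intro!: mult_nonneg_nonneg)
  thus ?thesis unfolding ah_gamma_def by linarith
qed

lemma sum_inv_sqrt: "(\<Sum>t=1..T. 1 / sqrt (real t)) \<le> 2 * sqrt (real T)"
proof (induction T)
  case 0 thus ?case by simp
next
  case (Suc T)
  have a: "sqrt (real T) < sqrt (real (Suc T))" by simp
  have b: "0 < sqrt (real (Suc T))" by simp
  have "1 / sqrt (real (Suc T)) \<le> 2 * sqrt (real (Suc T)) - 2 * sqrt (real T)"
  proof -
    have "(sqrt (real (Suc T)) + sqrt (real T)) * (sqrt (real (Suc T)) - sqrt (real T)) = 1"
      by (simp add: algebra_simps)
    moreover have "sqrt (real (Suc T)) + sqrt (real T) \<le> 2 * sqrt (real (Suc T))" using a by simp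
    ultimately have "2 * sqrt (real (Suc T)) * (sqrt (real (Suc T)) - sqrt (real T)) \<ge> 1"
      by (smt (verit, best) a mult_right_mono)
    hence "1 \<le> (2 * sqrt (real (Suc T)) - 2 * sqrt (real T)) * sqrt (real (Suc T))"
      by (simp add: algebra_simps)
    thus ?thesis using b by (simp add: divide_le_eq)
  qed
  thus ?case using Suc by simp
qed

lemma avg_le: "(a::real) \<le> c \<Longrightarrow> b \<le> c \<Longrightarrow> (a + b) / 2 \<le> (c + c) / 2"
  by simp

lemma mix_aux:
  fixes g Q P M m :: real
  assumes "0 \<le> g" "Q \<le> M" "m \<le> P"
  shows "Q - g * (M - m) \<le> Q - g * Q + g * P"
proof -
  have "g * (Q - P) \<le> g * (M - m)" using assms by (intro mult_left_mono) auto
  thus ?thesis by (simp add: algebra_simps)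
qed

lemma half_aux:
  fixes g Q P :: real
  assumes "(1 - g) * Q \<le> P" "g \<le> 1/2" "0 \<le> Q"
  shows "Q \<le> 2 * P"
proof -
  have "(1/2) * Q \<le> (1 - g) * Q" using assms by (intro mult_right_mono) auto
  thus ?thesis using assms by simp
qed

lemma round_facts:
  fixes A :: "(real^'d) set" and \<pi> q p :: "real^'d \<Rightarrow> real"
  assumes A: "finite A" and pi0: "\<forall>a\<in>A. \<pi> a \<ge> 0" and pi1: "(\<Sum>a\<in>A. \<pi> a) = 1"
    and invpi: "invertible (Mmat A \<pi>)"
    and mx: "Max ((\<lambda>x. x \<bullet> (matrix_inv (Mmat A \<pi>) *v x)) ` A) = real CARD('d)"
    and g: "0 < g" "g \<le> 1/2"
    and q0: "\<forall>a\<in>A. q a \<ge> 0" and q1: "(\<Sum>a\<in>A. q a) = 1"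
    and p: "p = (\<lambda>a. (1 - g) * q a + g * \<pi> a)"
    and yb: "\<forall>a\<in>A. m \<le> a \<bullet> yv \<and> a \<bullet> yv \<le> M" and m: "m \<le> 0" "0 \<le> M"
  shows "invertible (Mmat A p)"
    and "\<forall>x\<in>A. \<forall>a\<in>A. \<bar>x \<bullet> ah_yhat A p a yv\<bar> \<le> (M - m) * real CARD('d) / g"
    and "(\<Sum>a\<in>A. q a * (a \<bullet> yv)) - g * (M - m) \<le> (\<Sum>a\<in>A. p a * (a \<bullet> yv))"
    and "(\<Sum>a\<in>A. p a *\<^sub>R ah_yhat A p a yv) = yv"
    and "(\<Sum>a\<in>A. p a * (\<Sum>x\<in>A. q x * (x \<bullet> ah_yhat A p a yv)^2)) \<le> 2 * real CARD('d) * (M - m)^2"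
proof -
  define B where "B = matrix_inv (Mmat A p)"
  define c where "c = M - m"
  have pp: "\<forall>a\<in>A. p a \<ge> g * \<pi> a" using q0 g unfolding p by auto
  have p0: "\<forall>a\<in>A. p a \<ge> 0" using q0 pi0 g unfolding p by auto
  have pq: "\<forall>a\<in>A. (1 - g) * q a \<le> p a" using pi0 g unfolding p by auto
  show inv: "invertible (Mmat A p)" by (rule mmat_p_invertible[OF A g(1) pp pi0 invpi])
  have ab: "\<bar>a \<bullet> yv\<bar> \<le> c" if "a \<in> A" for a using yb that m unfolding c_def by fastforce
  have xbx: "x \<bullet> (B *v x) \<le> real CARD('d) / g" if x: "x \<in> A" for x
  proof -
    have "x \<bullet> (B *v x) \<le> (x \<bullet> (matrix_inv (Mmat A \<pi>) *v x)) / g"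
      unfolding B_def by (rule minv_le[OF A g(1) pp pi0 invpi inv])
    also have "x \<bullet> (matrix_inv (Mmat A \<pi>) *v x) \<le> real CARD('d)"
      unfolding mx[symmetric] using A x by (intro Max_ge) auto
    hence "(x \<bullet> (matrix_inv (Mmat A \<pi>) *v x)) / g \<le> real CARD('d) / g"
      using g by (simp add: divide_right_mono)
    finally show ?thesis .
  qed
  show "\<forall>x\<in>A. \<forall>a\<in>A. \<bar>x \<bullet> ah_yhat A p a yv\<bar> \<le> (M - m) * real CARD('d) / g"
  proof (intro ballI)
    fix x a assume x: "x \<in> A" and a: "a \<in> A"
    have "\<bar>x \<bullet> (B *v a)\<bar> \<le> (x \<bullet> (B *v x) + a \<bullet> (B *v a)) / 2"
      unfolding B_def by (rule minv_cs[OF A inv p0])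
    also have "\<dots> \<le> (real CARD('d) / g + real CARD('d) / g) / 2"
      by (rule avg_le[OF xbx[OF x] xbx[OF a]])
    finally have h: "\<bar>x \<bullet> (B *v a)\<bar> \<le> real CARD('d) / g" by simp
    have "\<bar>x \<bullet> ah_yhat A p a yv\<bar> = \<bar>a \<bullet> yv\<bar> * \<bar>x \<bullet> (B *v a)\<bar>"
      unfolding ah_yhat_def B_def by (simp add: abs_mult)
    also have "\<dots> \<le> c * (real CARD('d) / g)"
      using ab[OF a] h by (intro mult_mono) auto
    finally show "\<bar>x \<bullet> ah_yhat A p a yv\<bar> \<le> (M - m) * real CARD('d) / g" unfolding c_def by simp
  qed
  show "(\<Sum>a\<in>A. q a * (a \<bullet> yv)) - g * (M - m) \<le> (\<Sum>a\<in>A. p a * (a \<bullet> yv))"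
  proof -
    have "(\<Sum>a\<in>A. p a * (a \<bullet> yv)) = (\<Sum>a\<in>A. q a * (a \<bullet> yv)) - g * (\<Sum>a\<in>A. q a * (a \<bullet> yv)) + g * (\<Sum>a\<in>A. \<pi> a * (a \<bullet> yv))"
      unfolding p by (simp add: algebra_simps sum.distrib sum_subtractf sum_distrib_left)
    moreover have "(\<Sum>a\<in>A. q a * (a \<bullet> yv)) \<le> M"
    proof -
      have "(\<Sum>a\<in>A. q a * (a \<bullet> yv)) \<le> (\<Sum>a\<in>A. q a * M)"
        by (rule sum_mono) (use q0 yb in \<open>auto intro: mult_left_mono\<close>)
      thus ?thesis using q1 by (simp add: sum_distrib_right[symmetric])
    qed
    moreover have "m \<le> (\<Sum>a\<in>A. \<pi> a * (a \<bullet> yv))"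
    proof -
      have "(\<Sum>a\<in>A. \<pi> a * m) \<le> (\<Sum>a\<in>A. \<pi> a * (a \<bullet> yv))"
        by (rule sum_mono) (use pi0 yb in \<open>auto intro: mult_left_mono\<close>)
      thus ?thesis using pi1 by (simp add: sum_distrib_right[symmetric])
    qed
    ultimately show ?thesis using g mix_aux[of g] by simp
  qed
  show "(\<Sum>a\<in>A. p a *\<^sub>R ah_yhat A p a yv) = yv"
    unfolding ah_yhat_def by (rule minv_apply[OF A inv])
  show "(\<Sum>a\<in>A. p a * (\<Sum>x\<in>A. q x * (x \<bullet> ah_yhat A p a yv)^2)) \<le> 2 * real CARD('d) * (M - m)^2"
  proof -
    have "(\<Sum>a\<in>A. p a * (\<Sum>x\<in>A. q x * (x \<bullet> ah_yhat A p a yv)^2))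
        = (\<Sum>x\<in>A. q x * (\<Sum>a\<in>A. p a * ((a \<bullet> yv)^2 * (x \<bullet> (B *v a))^2)))"
      unfolding ah_yhat_def B_def[symmetric]
      by (simp add: sum_distrib_left power_mult_distrib ac_simps) (rule sum.swap)
    also have "\<dots> \<le> (\<Sum>x\<in>A. q x * (\<Sum>a\<in>A. p a * (c^2 * (x \<bullet> (B *v a))^2)))"
    proof (rule sum_mono)
      fix x assume x: "x \<in> A"
      have "(\<Sum>a\<in>A. p a * ((a \<bullet> yv)^2 * (x \<bullet> (B *v a))^2)) \<le> (\<Sum>a\<in>A. p a * (c^2 * (x \<bullet> (B *v a))^2))"
      proof (rule sum_mono)
        fix a assume a: "a \<in> A"
        have "\<bar>a \<bullet> yv\<bar>^2 \<le> c^2" by (rule power_mono[OF ab[OF a] abs_ge_zero])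
        hence "(a \<bullet> yv)^2 \<le> c^2" by simp
        hence "(a \<bullet> yv)^2 * (x \<bullet> (B *v a))^2 \<le> c^2 * (x \<bullet> (B *v a))^2"
          by (rule mult_right_mono) simp
        thus "p a * ((a \<bullet> yv)^2 * (x \<bullet> (B *v a))^2) \<le> p a * (c^2 * (x \<bullet> (B *v a))^2)"
          using p0 a by (intro mult_left_mono) auto
      qed
      thus "q x * (\<Sum>a\<in>A. p a * ((a \<bullet> yv)^2 * (x \<bullet> (B *v a))^2)) \<le> q x * (\<Sum>a\<in>A. p a * (c^2 * (x \<bullet> (B *v a))^2))"
        using q0 x by (intro mult_left_mono) auto
    qed
    also have "\<dots> = c^2 * (\<Sum>x\<in>A. q x * (x \<bullet> (B *v x)))"
    proof -
      have "(\<Sum>a\<in>A. p a * (c^2 * (x \<bullet> (B *v a))^2)) = c^2 * (x \<bullet> (B *v x))" for x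
      proof -
        have "(\<Sum>a\<in>A. p a * (c^2 * (x \<bullet> (B *v a))^2)) = c^2 * (\<Sum>a\<in>A. p a * (x \<bullet> (B *v a))^2)"
          by (simp add: sum_distrib_left mult.left_commute)
        also have "\<dots> = c^2 * (x \<bullet> (B *v x))"
          using minv_second[OF A inv, of x] unfolding B_def[symmetric] by simp
        finally show ?thesis .
      qed
      thus ?thesis by (simp add: sum_distrib_left ac_simps)
    qed
    also have "\<dots> \<le> c^2 * (\<Sum>x\<in>A. 2 * (p x * (x \<bullet> (B *v x))))"
    proof (intro mult_left_mono sum_mono)
      fix x assume x: "x \<in> A"
      have xb: "0 \<le> x \<bullet> (B *v x)" unfolding B_def by (rule minv_nonneg[OF A inv p0])
      have "q x \<le> 2 * p x" by (rule half_aux[of g]) (use pq x g q0 in auto)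
      thus "q x * (x \<bullet> (B *v x)) \<le> 2 * (p x * (x \<bullet> (B *v x)))"
        using xb by (simp add: mult_right_mono mult.assoc[symmetric])
    qed simp
    also have "\<dots> = 2 * real CARD('d) * c^2"
      using minv_trace[OF A inv] unfolding B_def[symmetric] by (simp add: sum_distrib_left[symmetric])
    finally show ?thesis unfolding c_def .
  qed
qed

lemma final_num:
  fixes d T L c R g0 Sg iG reg :: real
  assumes d: "d \<ge> 1" and T: "T \<ge> 1" and L: "L \<ge> 2/3" and c: "c > 0"
    and R: "R = sqrt (d * T * L)" and g0: "g0 = sqrt (5/2 * d * L)"
    and Sg: "Sg \<le> 2 * g0 * sqrt T" and iG: "iG \<le> 2 + sqrt T / g0"
    and reg: "reg \<le> 2 * (sqrt (L * (2 * d * T)) * c) + 2 * (2/3 * L + 1) * (2 * c * d * iG) + c * Sg"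
  shows "reg \<le> 12 * c * R + 18 * c * d * L"
proof -
  have "sqrt 2 \<le> sqrt (((283/200)::real)^2)" by (subst real_sqrt_le_iff) (simp add: power2_eq_square)
  hence s2: "sqrt 2 \<le> (283/200)" by simp
  have s25a: "(79/50) \<le> sqrt (5/2)" by (rule real_le_rsqrt) (simp add: power2_eq_square)
  have "sqrt (5/2) \<le> sqrt (((3953/2500)::real)^2)" by (subst real_sqrt_le_iff) (simp add: power2_eq_square)
  hence s25b: "sqrt (5/2) \<le> (3953/2500)" by simp
  have Lp: "L > 0" using L by simp
  have dp: "d > 0" using d by simp
  have e1: "sqrt (L * (2 * d * T)) = sqrt 2 * R"
    unfolding R by (simp add: real_sqrt_mult[symmetric] ac_simps)
  have e2: "g0 * sqrt T = sqrt (5/2) * R"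
    unfolding R g0 by (simp add: real_sqrt_mult[symmetric] ac_simps)
  have sL: "sqrt L * sqrt L = L" using Lp by simp
  have sd: "sqrt d * sqrt d = d" using dp by simp
  have g0p: "g0 > 0" unfolding g0 using Lp dp by simp
  have e3: "d * (sqrt T / g0) = R / (sqrt (5/2) * L)"
  proof -
    have "g0 = sqrt (5/2) * sqrt d * sqrt L" unfolding g0 by (simp only: real_sqrt_mult)
    moreover have "R = sqrt d * sqrt T * sqrt L" unfolding R by (simp only: real_sqrt_mult)
    ultimately show ?thesis using sL sd Lp dp
      by (simp add: field_simps)
  qed
  define u where "u = R / sqrt (5/2)"
  define w where "w = R / (sqrt (5/2) * L)"
  have R0: "R \<ge> 0" unfolding R using dp T Lp by simp
  have u: "u \<le> R / (79/50)" unfolding u_def using s25a R0 by (intro divide_left_mono) auto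
  have w: "w \<le> R * (3/2) / (79/50)"
  proof -
    have "(79/50) * (2/3) \<le> sqrt (5/2) * L" using s25a L by (intro mult_mono) auto
    hence "R / (sqrt (5/2) * L) \<le> R / ((79/50) * (2/3))" using R0 by (intro divide_left_mono) auto
    thus ?thesis unfolding w_def by simp
  qed
  have uw: "(2/3 * L + 1) * (R / (sqrt (5/2) * L)) = 2/3 * u + w"
    unfolding u_def w_def using Lp by (simp add: field_simps)
  have diG: "d * iG \<le> 2 * d + R / (sqrt (5/2) * L)"
    using mult_left_mono[OF iG, of d] dp e3 by (simp add: algebra_simps)
  have "2 * (2/3 * L + 1) * (2 * c * d * iG) = 4 * c * ((2/3 * L + 1) * (d * iG))" by (simp add: algebra_simps)
  also have "\<dots> \<le> 4 * c * ((2/3 * L + 1) * (2 * d + R / (sqrt (5/2) * L)))"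
    using diG c L by (intro mult_left_mono) auto
  also have "\<dots> = c * (16/3 * (d * L) + 8 * d + 8/3 * u + 4 * w)"
    using uw by (simp add: algebra_simps)
  finally have t2: "2 * (2/3 * L + 1) * (2 * c * d * iG) \<le> c * (16/3 * (d * L) + 8 * d + 8/3 * u + 4 * w)" .
  have t1: "2 * (sqrt (L * (2 * d * T)) * c) = c * (2 * (sqrt 2 * R))" unfolding e1 by simp
  have t3: "c * Sg \<le> c * (2 * (sqrt (5/2) * R))"
    using Sg e2 c by (intro mult_left_mono) (auto simp: ac_simps)
  have inner: "2 * (sqrt 2 * R) + (16/3 * (d * L) + 8 * d + 8/3 * u + 4 * w) + 2 * (sqrt (5/2) * R)
      \<le> 12 * R + 18 * (d * L)"
  proof -
    have a1: "sqrt 2 * R \<le> (283/200) * R" using s2 R0 by (intro mult_right_mono) auto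
    have a2: "sqrt (5/2) * R \<le> (3953/2500) * R" using s25b R0 by (intro mult_right_mono) auto
    have a3: "8 * d \<le> 12 * (d * L)" using L dp by simp
    have a4: "0 \<le> d * L" using dp Lp by simp
    have u': "u \<le> 50/79 * R" using u by simp
    have w': "w \<le> 75/79 * R" using w by simp
    show ?thesis using a1 a2 a3 a4 u' w' R0 by linarith
  qed
  have "reg \<le> c * (2 * (sqrt 2 * R)) + c * (16/3 * (d * L) + 8 * d + 8/3 * u + 4 * w) + c * (2 * (sqrt (5/2) * R))"
    using reg t1 t2 t3 by linarith
  also have "\<dots> = c * (2 * (sqrt 2 * R) + (16/3 * (d * L) + 8 * d + 8/3 * u + 4 * w) + 2 * (sqrt (5/2) * R))"
    by (simp add: algebra_simps)
  also have "\<dots> \<le> c * (12 * R + 18 * (d * L))" using inner c by (intro mult_left_mono) auto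
  finally show ?thesis by (simp add: algebra_simps)
qed


lemma gamma_range:
  fixes A :: "(real^'d) set"
  assumes K: "card A \<ge> 2"
  shows "0 \<le> ah_gamma A t" "ah_gamma A t \<le> 1/2"
proof -
  have "ln (real (card A)) > 0" using K by simp
  hence "0 \<le> sqrt (5/2 * real CARD('d) * ln (real (card A))) / sqrt (real t)" by simp
  thus "0 \<le> ah_gamma A t" unfolding ah_gamma_def by simp
  show "ah_gamma A t \<le> 1/2" unfolding ah_gamma_def by (rule min.cobounded1)
qed

lemma sqrt_amgm:
  fixes z s :: real assumes "s > 0" "z \<ge> 0"
  shows "sqrt z \<le> (z / s + s) / 2"
proof -
  have "0 \<le> (sqrt z - s)^2" by simp
  hence "2 * s * sqrt z \<le> z + s^2" using assms by (simp add: power2_diff mult.commute mult.left_commute)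
  hence "sqrt z \<le> (z + s^2) / (2 * s)" using assms by (simp add: field_simps)
  also have "\<dots> = (z / s + s) / 2" using assms by (simp add: field_simps power2_eq_square)
  finally show ?thesis .
qed

theorem theorem5:
  fixes A :: "(real^'d) set" and \<pi> :: "real^'d \<Rightarrow> real"
    and y :: "nat \<Rightarrow> real^'d" and m M :: real and T :: nat
  assumes "finite A" and "card A \<ge> 2" and "span A = UNIV"
    and "\<forall>a\<in>A. \<pi> a \<ge> 0" and "(\<Sum>a\<in>A. \<pi> a) = 1"
    and "invertible (Mmat A \<pi>)"
    and "Max ((\<lambda>x. x \<bullet> (matrix_inv (Mmat A \<pi>) *v x)) ` A) = real CARD('d)"
    and "m < M" and "m \<le> 0" and "0 \<le> M"
    and "\<forall>t\<ge>1. \<forall>x\<in>A. m \<le> x \<bullet> y t \<and> x \<bullet> y t \<le> M"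
    and "T \<ge> 1"
  shows "ah_regret A \<pi> (ah_gamma A) y T
         \<le> 12 * (M - m) * sqrt (real CARD('d) * real T * ln (real (card A)))
           + 18 * (M - m) * real CARD('d) * ln (real (card A))"
proof -
  note A = assms(1) and K = assms(2) and pi0 = assms(4) and pi1 = assms(5) and invpi = assms(6)
    and mx = assms(7) and mM = assms(8) and m0 = assms(9) and M0 = assms(10) and yb = assms(11)
    and T1 = assms(12)
  have An: "A \<noteq> {}" using K by auto
  define \<gamma> where "\<gamma> = ah_gamma A"
  define P where "P = (\<lambda>t X a. ah_pt A \<pi> \<gamma> y X t a)"
  define st where "st X = ah_state A \<pi> \<gamma> y X" for X
  define Qd where "Qd X t = ah_q A (fst (st X (t-1))) (snd (st X (t-1)))" for X t
  define Yh where "Yh X t = ah_yhat A (P t X) (X t) (y t)" for X t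
  define mu where "mu X t = (\<Sum>x\<in>A. Qd X t x * (x \<bullet> Yh X t))" for X t
  define vv where "vv X t = (\<Sum>x\<in>A. Qd X t x * (x \<bullet> Yh X t)^2)" for X t
  define L where "L = ln (real (card A))"
  define d where "d = real CARD('d)"
  define c where "c = M - m"
  define iG where "iG = 1 / \<gamma> T"
  define B where "B = 2 * c * d * iG"
  define g0 where "g0 = sqrt (5/2 * real CARD('d) * ln (real (card A)))"
  have Lp: "L > 0" unfolding L_def using K by simp
  have L23: "L \<ge> 2/3"
  proof -
    have "ln 2 \<le> ln (real (card A))" using K by simp
    thus ?thesis using ln2_ge_two_thirds unfolding L_def by linarith
  qed
  have d1: "d \<ge> 1" unfolding d_def by simp
  have cp: "c > 0" unfolding c_def using mM by simp
  have gr: "0 \<le> \<gamma> t" "\<gamma> t \<le> 1/2" for t unfolding \<gamma>_def using gamma_range[OF K] by auto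
  have gp: "0 < \<gamma> t" if "t \<ge> 1" for t unfolding \<gamma>_def using gamma_facts[OF K that] by auto
  have Pq: "P t X = (\<lambda>a. (1 - \<gamma> t) * Qd X t a + \<gamma> t * \<pi> a)" for t X
    unfolding P_def Qd_def st_def ah_pt_def ah_p_def by simp
  have qd: "\<forall>a\<in>A. 0 \<le> Qd X t a" "(\<Sum>a\<in>A. Qd X t a) = 1" for X t
    unfolding Qd_def using q_dist[OF A An] by auto
  have dep: "\<And>t X X'. (\<forall>s<t. X s = X' s) \<Longrightarrow> P t X = P t X'"
    unfolding P_def using pt_dep by metis
  have P1: "\<And>t X. (\<Sum>a\<in>A. P t X a) = 1"
  proof -
    fix t X
    have "(\<Sum>a\<in>A. P t X a) = (1 - \<gamma> t) * (\<Sum>a\<in>A. Qd X t a) + \<gamma> t * (\<Sum>a\<in>A. \<pi> a)"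
      unfolding Pq by (simp add: sum.distrib sum_distrib_left)
    thus "(\<Sum>a\<in>A. P t X a) = 1" using qd(2) pi1 by simp
  qed
  have P0: "\<And>t X a. a \<in> A \<Longrightarrow> 0 \<le> P t X a"
  proof -
    fix t X a assume a: "a \<in> A"
    have "0 \<le> (1 - \<gamma> t) * Qd X t a" using gr[of t] qd(1) a by simp
    moreover have "0 \<le> \<gamma> t * \<pi> a" using gr[of t] pi0 a by simp
    ultimately show "0 \<le> P t X a" unfolding Pq by simp
  qed
  have Qdep: "Qd X t = Qd X' t" if "\<forall>s<t. X s = X' s" for X X' t
  proof -
    have "st X (t-1) = st X' (t-1)" unfolding st_def by (rule state_dep) (use that in auto)
    thus ?thesis unfolding Qd_def by simp
  qed
  have ybt: "\<forall>a\<in>A. m \<le> a \<bullet> y t \<and> a \<bullet> y t \<le> M" if "t \<ge> 1" for t using yb that by blast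
  have RF2: "\<forall>x\<in>A. \<forall>a\<in>A. \<bar>x \<bullet> ah_yhat A (P t X) a (y t)\<bar> \<le> (M - m) * real CARD('d) / \<gamma> t"
    if "1 \<le> t" for t X
    by (rule round_facts(2)[OF A pi0 pi1 invpi mx gp[OF that] gr(2) qd Pq ybt[OF that] m0 M0])
  have RF3: "(\<Sum>a\<in>A. Qd X t a * (a \<bullet> y t)) - \<gamma> t * (M - m) \<le> (\<Sum>a\<in>A. P t X a * (a \<bullet> y t))"
    if "1 \<le> t" for t X
    by (rule round_facts(3)[OF A pi0 pi1 invpi mx gp[OF that] gr(2) qd Pq ybt[OF that] m0 M0])
  have RF4: "(\<Sum>a\<in>A. P t X a *\<^sub>R ah_yhat A (P t X) a (y t)) = y t"
    if "1 \<le> t" for t X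
    by (rule round_facts(4)[OF A pi0 pi1 invpi mx gp[OF that] gr(2) qd Pq ybt[OF that] m0 M0])
  have RF5: "(\<Sum>a\<in>A. P t X a * (\<Sum>x\<in>A. Qd X t x * (x \<bullet> ah_yhat A (P t X) a (y t))^2)) \<le> 2 * real CARD('d) * (M - m)^2"
    if "1 \<le> t" for t X
    by (rule round_facts(5)[OF A pi0 pi1 invpi mx gp[OF that] gr(2) qd Pq ybt[OF that] m0 M0])
  have st0: "st X 0 = (0, 0)" for X by (simp add: st_def)
  have stS: "st X (Suc t) = (fst (st X t) + Yh X (Suc t),
        snd (st X t) + ah_delta A (ah_q A (fst (st X t)) (snd (st X t))) (snd (st X t)) (Yh X (Suc t)))" for X t
    unfolding st_def Yh_def P_def by (rule state_rec)
  have swap: "(\<Sum>a\<in>A. p a * (\<Sum>x\<in>A. q x * (x \<bullet> f a))) = (\<Sum>x\<in>A. q x * (x \<bullet> (\<Sum>a\<in>A. p a *\<^sub>R f a)))"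
    for p q :: "real^'d \<Rightarrow> real" and f :: "real^'d \<Rightarrow> real^'d"
  proof -
    have "(\<Sum>a\<in>A. p a * (\<Sum>x\<in>A. q x * (x \<bullet> f a))) = (\<Sum>a\<in>A. \<Sum>x\<in>A. q x * (p a * (x \<bullet> f a)))"
      by (simp add: sum_distrib_left mult.left_commute)
    also have "\<dots> = (\<Sum>x\<in>A. \<Sum>a\<in>A. q x * (p a * (x \<bullet> f a)))" by (rule sum.swap)
    also have "\<dots> = (\<Sum>x\<in>A. q x * (x \<bullet> (\<Sum>a\<in>A. p a *\<^sub>R f a)))"
      by (simp add: inner_sum_right sum_distrib_left)
    finally show ?thesis .
  qed
  have ER: "ah_expected_reward A \<pi> \<gamma> y T = EE P A T (\<lambda>X. \<Sum>t=1..T. X t \<bullet> y t)"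
    unfolding ah_expected_reward_def EE_def P_def by simp
  have SC: "EE P A T (\<lambda>X. X t \<bullet> y t) = EE P A T (\<lambda>X. \<Sum>a\<in>A. P t X a * (a \<bullet> y t))"
    if "t \<in> {1..T}" for t
    by (rule EE_step[OF dep P1, where G="\<lambda>X a. a \<bullet> y t" and t=t]) (use that in auto)
  have SD: "EE P A T (\<lambda>X. \<Sum>a\<in>A. Qd X t a * (a \<bullet> y t)) - \<gamma> t * c \<le> EE P A T (\<lambda>X. \<Sum>a\<in>A. P t X a * (a \<bullet> y t))"
    if "t \<in> {1..T}" for t
  proof -
    have "EE P A T (\<lambda>X. (\<Sum>a\<in>A. Qd X t a * (a \<bullet> y t)) - \<gamma> t * c) \<le> EE P A T (\<lambda>X. \<Sum>a\<in>A. P t X a * (a \<bullet> y t))"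
      by (rule EE_mono[OF P0]) (use RF3 that in \<open>auto simp: c_def\<close>)
    thus ?thesis by (simp add: EE_diff EE_const[OF dep P1])
  qed
  have SE: "EE P A T (\<lambda>X. mu X t) = EE P A T (\<lambda>X. \<Sum>a\<in>A. Qd X t a * (a \<bullet> y t))"
    if "t \<in> {1..T}" for t
  proof -
    have "EE P A T (\<lambda>X. mu X t) = EE P A T (\<lambda>X. \<Sum>a\<in>A. P t X a * (\<Sum>x\<in>A. Qd X t x * (x \<bullet> ah_yhat A (P t X) a (y t))))"
      unfolding mu_def Yh_def
    proof (rule EE_step[OF dep P1, where G="\<lambda>X a. \<Sum>x\<in>A. Qd X t x * (x \<bullet> ah_yhat A (P t X) a (y t))" and t=t])
      show "1 \<le> t" "t \<le> T" using that by auto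
      fix X X' :: "nat \<Rightarrow> real^'d" and a assume h: "\<forall>s<t. X s = X' s"
      have "P t X = P t X'" by (rule dep[OF h])
      moreover have "Qd X t = Qd X' t" by (rule Qdep[OF h])
      ultimately show "(\<Sum>x\<in>A. Qd X t x * (x \<bullet> ah_yhat A (P t X) a (y t))) = (\<Sum>x\<in>A. Qd X' t x * (x \<bullet> ah_yhat A (P t X') a (y t)))"
        by simp
    qed
    also have "\<dots> = EE P A T (\<lambda>X. \<Sum>a\<in>A. Qd X t a * (a \<bullet> y t))"
      unfolding swap using RF4 that by simp
    finally show ?thesis .
  qed
  have SF: "(\<Sum>t=1..T. x \<bullet> y t) = EE P A T (\<lambda>X. x \<bullet> fst (st X T))" if x: "x \<in> A" for x
  proof -
    have "EE P A T (\<lambda>X. x \<bullet> fst (st X T)) = EE P A T (\<lambda>X. \<Sum>t=1..T. x \<bullet> Yh X t)"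
    proof -
      have "fst (st X T) = (\<Sum>t=1..T. Yh X t)" for X by (rule st_S[OF A K st0[of X] stS[of X]])
      thus ?thesis by (simp add: inner_sum_right)
    qed
    also have "\<dots> = (\<Sum>t=1..T. EE P A T (\<lambda>X. x \<bullet> Yh X t))" by (rule EE_sum)
    also have "\<dots> = (\<Sum>t=1..T. x \<bullet> y t)"
    proof (rule sum.cong[OF refl])
      fix t assume t: "t \<in> {1..T}"
      have "EE P A T (\<lambda>X. x \<bullet> Yh X t) = EE P A T (\<lambda>X. \<Sum>a\<in>A. P t X a * (x \<bullet> ah_yhat A (P t X) a (y t)))"
        unfolding Yh_def
      proof (rule EE_step[OF dep P1, where G="\<lambda>X a. x \<bullet> ah_yhat A (P t X) a (y t)" and t=t])
        show "1 \<le> t" "t \<le> T" using t by auto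
        fix X X' :: "nat \<Rightarrow> real^'d" and a assume h: "\<forall>s<t. X s = X' s"
        have "P t X = P t X'" by (rule dep[OF h])
        thus "x \<bullet> ah_yhat A (P t X) a (y t) = x \<bullet> ah_yhat A (P t X') a (y t)" by simp
      qed
      also have "\<dots> = EE P A T (\<lambda>X. x \<bullet> y t)"
      proof -
        have "(\<Sum>a\<in>A. P t X a * (x \<bullet> ah_yhat A (P t X) a (y t))) = x \<bullet> y t" for X
        proof -
          have "(\<Sum>a\<in>A. P t X a * (x \<bullet> ah_yhat A (P t X) a (y t))) = x \<bullet> (\<Sum>a\<in>A. P t X a *\<^sub>R ah_yhat A (P t X) a (y t))"
            by (simp add: inner_sum_right)
          thus ?thesis using RF4[of t X] t by simp
        qed
        thus ?thesis by simp
      qed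
      also have "\<dots> = x \<bullet> y t" by (rule EE_const[OF dep P1])
      finally show "EE P A T (\<lambda>X. x \<bullet> Yh X t) = x \<bullet> y t" .
    qed
    finally show ?thesis by simp
  qed
  have gTp: "\<gamma> T > 0" using gp[OF T1] .
  have iGp: "iG > 0" unfolding iG_def using gTp by simp
  have B0: "B \<ge> 0" unfolding B_def using cp d1 iGp by simp
  have hB: "\<forall>s\<in>{1..T}. \<forall>x\<in>A. x \<bullet> Yh X s - (\<Sum>z\<in>A. ah_q A (fst (st X (s-1))) (snd (st X (s-1))) z * (z \<bullet> Yh X s)) \<le> B"
    if X: "X \<in> PiE {1..T} (\<lambda>_. A)" for X
  proof (intro ballI)
    fix s x assume s: "s \<in> {1..T}" and x: "x \<in> A"
    have Xs: "X s \<in> A" using X s by (auto simp: PiE_iff)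
    have s1: "1 \<le> s" using s by simp
    have gle: "\<gamma> T \<le> \<gamma> s" unfolding \<gamma>_def by (rule gamma_anti) (use s K in auto)
    have gs: "\<gamma> s > 0" using gp[OF s1] .
    have ig: "1 / \<gamma> s \<le> iG" unfolding iG_def using gle gTp by (simp add: frac_le)
    have bnd: "\<bar>z \<bullet> Yh X s\<bar> \<le> c * d * iG" if z: "z \<in> A" for z
    proof -
      have "\<bar>z \<bullet> Yh X s\<bar> \<le> (M - m) * real CARD('d) / \<gamma> s"
        unfolding Yh_def using RF2[OF s1, of X] z Xs by blast
      also have "\<dots> = c * d * (1 / \<gamma> s)" unfolding c_def d_def by simp
      also have "\<dots> \<le> c * d * iG" using ig cp d1 by (intro mult_left_mono) auto
      finally show ?thesis .
    qed
    have "(\<Sum>z\<in>A. Qd X s z * (- (c * d * iG))) \<le> (\<Sum>z\<in>A. Qd X s z * (z \<bullet> Yh X s))"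
    proof (rule sum_mono)
      fix z assume z: "z \<in> A"
      have "- (c * d * iG) \<le> z \<bullet> Yh X s" using bnd[OF z] by (simp add: abs_le_iff)
      thus "Qd X s z * (- (c * d * iG)) \<le> Qd X s z * (z \<bullet> Yh X s)"
        using qd(1) z by (intro mult_left_mono) auto
    qed
    moreover have "(\<Sum>z\<in>A. Qd X s z * (- (c * d * iG))) = (\<Sum>z\<in>A. Qd X s z) * (- (c * d * iG))"
      by (rule sum_distrib_right[symmetric])
    ultimately have mu_lb: "- (c * d * iG) \<le> (\<Sum>z\<in>A. Qd X s z * (z \<bullet> Yh X s))"
      using qd(2)[of X s] by simp
    have xb: "x \<bullet> Yh X s \<le> c * d * iG" using bnd[OF x] by (simp add: abs_le_iff)
    have "x \<bullet> Yh X s - (\<Sum>z\<in>A. Qd X s z * (z \<bullet> Yh X s)) \<le> B"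
      using xb mu_lb unfolding B_def by simp
    thus "x \<bullet> Yh X s - (\<Sum>z\<in>A. ah_q A (fst (st X (s-1))) (snd (st X (s-1))) z * (z \<bullet> Yh X s)) \<le> B"
      unfolding Qd_def .
  qed
  have path: "Max ((\<lambda>x. x \<bullet> fst (st X T)) ` A) - (\<Sum>t=1..T. mu X t)
      \<le> 2 * sqrt (L * (\<Sum>t=1..T. vv X t)) + 2 * ((2/3 * L + 1) * B)"
    if X: "X \<in> PiE {1..T} (\<lambda>_. A)" for X
  proof -
    have r: "Max ((\<lambda>x. x \<bullet> fst (st X T)) ` A) - (\<Sum>t=1..T. mu X t) \<le> 2 * snd (st X T)"
      using st_regret[OF A K st0[of X] stS[of X], of T] unfolding mu_def Qd_def .
    have b: "snd (st X T) \<le> sqrt (L * (\<Sum>t=1..T. vv X t)) + (2/3 * L + 1) * B"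
      using st_D_bound[OF A K st0[of X] stS[of X] B0 hB[OF X]] unfolding vv_def Qd_def L_def .
    show ?thesis using r b by simp
  qed
  have vv0: "0 \<le> vv X t" for X t unfolding vv_def using qd(1) by (intro sum_nonneg) auto
  have EVt: "EE P A T (\<lambda>X. vv X t) \<le> 2 * d * c^2" if t: "t \<in> {1..T}" for t
  proof -
    have t1: "1 \<le> t" using t by simp
    have "EE P A T (\<lambda>X. vv X t) = EE P A T (\<lambda>X. \<Sum>a\<in>A. P t X a * (\<Sum>x\<in>A. Qd X t x * (x \<bullet> ah_yhat A (P t X) a (y t))^2))"
      unfolding vv_def Yh_def
    proof (rule EE_step[OF dep P1, where G="\<lambda>X a. \<Sum>x\<in>A. Qd X t x * (x \<bullet> ah_yhat A (P t X) a (y t))^2" and t=t])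
      show "1 \<le> t" "t \<le> T" using t by auto
      fix X X' :: "nat \<Rightarrow> real^'d" and a assume h: "\<forall>s<t. X s = X' s"
      have "P t X = P t X'" by (rule dep[OF h])
      moreover have "Qd X t = Qd X' t" by (rule Qdep[OF h])
      ultimately show "(\<Sum>x\<in>A. Qd X t x * (x \<bullet> ah_yhat A (P t X) a (y t))^2) = (\<Sum>x\<in>A. Qd X' t x * (x \<bullet> ah_yhat A (P t X') a (y t))^2)"
        by simp
    qed
    also have "\<dots> \<le> EE P A T (\<lambda>X. 2 * d * c^2)"
    proof (rule EE_mono[OF P0])
      fix X
      show "(\<Sum>a\<in>A. P t X a * (\<Sum>x\<in>A. Qd X t x * (x \<bullet> ah_yhat A (P t X) a (y t))^2)) \<le> 2 * d * c^2"
        using RF5[OF t1, of X] unfolding c_def d_def .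
    qed
    also have "\<dots> = 2 * d * c^2" by (rule EE_const[OF dep P1])
    finally show ?thesis .
  qed
  have EV: "EE P A T (\<lambda>X. \<Sum>t=1..T. vv X t) \<le> real T * (2 * d * c^2)"
  proof -
    have "EE P A T (\<lambda>X. \<Sum>t=1..T. vv X t) = (\<Sum>t=1..T. EE P A T (\<lambda>X. vv X t))" by (rule EE_sum)
    also have "\<dots> \<le> (\<Sum>t=1..T. 2 * d * c^2)" by (rule sum_mono) (rule EVt)
    also have "\<dots> = real T * (2 * d * c^2)" by simp
    finally show ?thesis .
  qed
  define s0 where "s0 = sqrt (L * (2 * d * real T)) * c"
  have s0p: "s0 > 0" unfolding s0_def using Lp d1 T1 cp by simp
  have s0sq: "s0 * s0 = L * (real T * (2 * d * c^2))"
    unfolding s0_def using Lp d1 by (simp add: power2_eq_square algebra_simps)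
  have EJ: "EE P A T (\<lambda>X. sqrt (L * (\<Sum>t=1..T. vv X t))) \<le> s0"
  proof -
    have "EE P A T (\<lambda>X. sqrt (L * (\<Sum>t=1..T. vv X t))) \<le> EE P A T (\<lambda>X. L / (2 * s0) * (\<Sum>t=1..T. vv X t) + s0 / 2)"
    proof (rule EE_mono[OF P0])
      fix X
      have "0 \<le> L * (\<Sum>t=1..T. vv X t)" using Lp vv0 by (intro mult_nonneg_nonneg sum_nonneg) auto
      hence "sqrt (L * (\<Sum>t=1..T. vv X t)) \<le> (L * (\<Sum>t=1..T. vv X t) / s0 + s0) / 2"
        by (rule sqrt_amgm[OF s0p])
      thus "sqrt (L * (\<Sum>t=1..T. vv X t)) \<le> L / (2 * s0) * (\<Sum>t=1..T. vv X t) + s0 / 2"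
        by (simp add: field_simps)
    qed
    also have "\<dots> = L / (2 * s0) * EE P A T (\<lambda>X. \<Sum>t=1..T. vv X t) + s0 / 2"
      by (simp only: EE_add EE_cmult EE_const[OF dep P1])
    also have "\<dots> \<le> L / (2 * s0) * (real T * (2 * d * c^2)) + s0 / 2"
      using EV Lp s0p by (intro add_right_mono mult_left_mono) auto
    also have "\<dots> = s0" using s0sq s0p by (simp add: field_simps)
    finally show ?thesis .
  qed
  have MaxE: "Max ((\<lambda>x. \<Sum>t=1..T. x \<bullet> y t) ` A) \<le> EE P A T (\<lambda>X. Max ((\<lambda>x. x \<bullet> fst (st X T)) ` A))"
  proof (subst Max_le_iff)
    show "finite ((\<lambda>x. \<Sum>t=1..T. x \<bullet> y t) ` A)" "(\<lambda>x. \<Sum>t=1..T. x \<bullet> y t) ` A \<noteq> {}" using A An by auto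
    show "\<forall>a\<in>(\<lambda>x. \<Sum>t=1..T. x \<bullet> y t) ` A. a \<le> EE P A T (\<lambda>X. Max ((\<lambda>x. x \<bullet> fst (st X T)) ` A))"
    proof
      fix r assume "r \<in> (\<lambda>x. \<Sum>t=1..T. x \<bullet> y t) ` A"
      then obtain x where x: "x \<in> A" "r = (\<Sum>t=1..T. x \<bullet> y t)" by auto
      have "r = EE P A T (\<lambda>X. x \<bullet> fst (st X T))" using SF[OF x(1)] x(2) by simp
      also have "\<dots> \<le> EE P A T (\<lambda>X. Max ((\<lambda>x. x \<bullet> fst (st X T)) ` A))"
        by (rule EE_mono[OF P0]) (use A x(1) in auto)
      finally show "r \<le> EE P A T (\<lambda>X. Max ((\<lambda>x. x \<bullet> fst (st X T)) ` A))" .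
    qed
  qed
  have ERb: "EE P A T (\<lambda>X. \<Sum>t=1..T. mu X t) - c * (\<Sum>t=1..T. \<gamma> t) \<le> ah_expected_reward A \<pi> \<gamma> y T"
  proof -
    have "EE P A T (\<lambda>X. \<Sum>t=1..T. mu X t) - c * (\<Sum>t=1..T. \<gamma> t) = (\<Sum>t=1..T. EE P A T (\<lambda>X. mu X t) - \<gamma> t * c)"
      by (simp add: EE_sum sum_subtractf sum_distrib_left mult.commute)
    also have "\<dots> \<le> (\<Sum>t=1..T. EE P A T (\<lambda>X. X t \<bullet> y t))"
    proof (rule sum_mono)
      fix t assume t: "t \<in> {1..T}"
      show "EE P A T (\<lambda>X. mu X t) - \<gamma> t * c \<le> EE P A T (\<lambda>X. X t \<bullet> y t)"
        using SD[OF t] SE[OF t] SC[OF t] by simp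
    qed
    also have "\<dots> = ah_expected_reward A \<pi> \<gamma> y T" unfolding ER by (simp add: EE_sum)
    finally show ?thesis .
  qed
  have main: "ah_regret A \<pi> \<gamma> y T \<le> 2 * s0 + 2 * ((2/3 * L + 1) * B) + c * (\<Sum>t=1..T. \<gamma> t)"
  proof -
    have "ah_regret A \<pi> \<gamma> y T \<le> EE P A T (\<lambda>X. Max ((\<lambda>x. x \<bullet> fst (st X T)) ` A)) - EE P A T (\<lambda>X. \<Sum>t=1..T. mu X t) + c * (\<Sum>t=1..T. \<gamma> t)"
      unfolding ah_regret_def using MaxE ERb by simp
    also have "EE P A T (\<lambda>X. Max ((\<lambda>x. x \<bullet> fst (st X T)) ` A)) - EE P A T (\<lambda>X. \<Sum>t=1..T. mu X t)
        = EE P A T (\<lambda>X. Max ((\<lambda>x. x \<bullet> fst (st X T)) ` A) - (\<Sum>t=1..T. mu X t))" by (simp add: EE_diff)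
    also have "\<dots> \<le> EE P A T (\<lambda>X. 2 * sqrt (L * (\<Sum>t=1..T. vv X t)) + 2 * ((2/3 * L + 1) * B))"
      by (rule EE_mono[OF P0 path])
    also have "\<dots> = 2 * EE P A T (\<lambda>X. sqrt (L * (\<Sum>t=1..T. vv X t))) + 2 * ((2/3 * L + 1) * B)"
      by (simp only: EE_add EE_cmult EE_const[OF dep P1])
    also have "\<dots> \<le> 2 * s0 + 2 * ((2/3 * L + 1) * B)" using EJ by simp
    finally show ?thesis by simp
  qed
  have Sg: "(\<Sum>t=1..T. \<gamma> t) \<le> 2 * g0 * sqrt (real T)"
  proof -
    have "(\<Sum>t=1..T. \<gamma> t) \<le> (\<Sum>t=1..T. g0 * (1 / sqrt (real t)))"
    proof (rule sum_mono)
      fix t assume "t \<in> {1..T}"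
      hence "1 \<le> t" by simp
      thus "\<gamma> t \<le> g0 * (1 / sqrt (real t))" unfolding \<gamma>_def g0_def using gamma_facts(3)[OF K] by simp
    qed
    also have "\<dots> = g0 * (\<Sum>t=1..T. 1 / sqrt (real t))" by (simp add: sum_distrib_left)
    also have "\<dots> \<le> g0 * (2 * sqrt (real T))"
      using sum_inv_sqrt[of T] Lp unfolding L_def by (intro mult_left_mono) (auto simp: g0_def)
    finally show ?thesis by simp
  qed
  have iGb: "iG \<le> 2 + sqrt (real T) / g0"
    unfolding iG_def \<gamma>_def g0_def using gamma_facts(4)[OF K T1] .
  have fin: "ah_regret A \<pi> \<gamma> y T \<le> 12 * c * sqrt (d * real T * L) + 18 * c * d * L"
  proof (rule final_num[OF d1 _ L23 cp refl _ Sg iGb])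
    show "1 \<le> real T" using T1 by simp
    show "g0 = sqrt (5/2 * d * L)" unfolding g0_def d_def L_def ..
    show "ah_regret A \<pi> \<gamma> y T \<le> 2 * (sqrt (L * (2 * d * real T)) * c) + 2 * (2/3 * L + 1) * (2 * c * d * iG) + c * (\<Sum>t=1..T. \<gamma> t)"
      using main unfolding s0_def B_def by (simp add: algebra_simps)
  qed
  thus ?thesis unfolding \<gamma>_def c_def d_def L_def by (simp add: algebra_simps)
qed


end
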